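(* Let $R$ be an integral domain. The following conditions are equivalent: (i) $R$ is an almost Krull domain satisfying the $t\#$-property; (ii) $R$ is an almost Krull domain satisfying the $t\#\#$-property; (iii) $R$ is a Krull domain.
   Context: $R$ is an integral domain with quotient field $K\neq R$. For a nonzero fractional ideal $I$, $I_v=(R:(R:I))$ where $(R:I)=\{x\in K: xI\subseteq R\}$, and $I_t=\bigcup\{J_v: J\subseteq I\text{ nonzero finitely generated}\}$; $I$ is a $t$-ideal if $I=I_t$; a $t$-prime is a prime $t$-ideal; $t\text{-Max}(R)$ is the set of ideals maximal among proper $t$-ideals. $R$ is almost Krull if $R_M$ is a rank-one discrete valuation domain for each $M\in t\text{-Max}(R)$. $R$ has the $t\#$-property if $\bigcap_{M\in\mathcal M_1}R_M\neq\bigcap_{M\in\mathcal M_2}R_M$ for any two distinct subsets $\mathcal M_1,\mathcal M_2$ of $t\text{-Max}(R)$. $R$ has the $t\#\#$-property if $\bigcap_{P\in\mathcal P_1}R_P\neq\bigcap_{P\in\mathcal P_2}R_P$ for any two distinct sets $\mathcal P_1,\mathcal P_2$ of pairwise incomparable $t$-prime ideals. *)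

theory Defs
  imports Main
begin

text \<open>An integral domain R is modelled as a subring of a field of type 'a
  whose fraction field is all of 'a (so K = UNIV).\<close>

definition subring :: "'a::field set \<Rightarrow> bool" where
  "subring R \<longleftrightarrow> 0 \<in> R \<and> 1 \<in> R \<and>
     (\<forall>x\<in>R. \<forall>y\<in>R. x + y \<in> R \<and> x - y \<in> R \<and> x * y \<in> R)"

definition quotient_field_is_UNIV :: "'a::field set \<Rightarrow> bool" where
  "quotient_field_is_UNIV R \<longleftrightarrow> (\<forall>x. \<exists>a\<in>R. \<exists>b\<in>R. b \<noteq> 0 \<and> x = a / b)"

definition colon :: "'a::field set \<Rightarrow> 'a set \<Rightarrow> 'a set" where
  "colon R I = {x. \<forall>y\<in>I. x * y \<in> R}"

definition v_op :: "'a::field set \<Rightarrow> 'a set \<Rightarrow> 'a set" where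
  "v_op R I = colon R (colon R I)"

definition ideal_of :: "'a::field set \<Rightarrow> 'a set \<Rightarrow> bool" where
  "ideal_of R I \<longleftrightarrow> I \<subseteq> R \<and> 0 \<in> I \<and> (\<forall>x\<in>I. \<forall>y\<in>I. x + y \<in> I) \<and>
     (\<forall>r\<in>R. \<forall>x\<in>I. r * x \<in> I)"

definition gen_by :: "'a::field set \<Rightarrow> 'a set \<Rightarrow> 'a set" where
  "gen_by R F = {\<Sum>a\<in>F. r a * a | r. \<forall>a\<in>F. r a \<in> R}"

definition fin_gen :: "'a::field set \<Rightarrow> 'a set \<Rightarrow> bool" where
  "fin_gen R J \<longleftrightarrow> (\<exists>F. finite F \<and> J = gen_by R F)"

definition t_op :: "'a::field set \<Rightarrow> 'a set \<Rightarrow> 'a set" where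
  "t_op R I = \<Union>{v_op R J | J. J \<subseteq> I \<and> J \<noteq> {0} \<and> fin_gen R J}"

definition t_ideal :: "'a::field set \<Rightarrow> 'a set \<Rightarrow> bool" where
  "t_ideal R I \<longleftrightarrow> ideal_of R I \<and> I \<noteq> {0} \<and> t_op R I = I"

definition prime_ideal_of :: "'a::field set \<Rightarrow> 'a set \<Rightarrow> bool" where
  "prime_ideal_of R P \<longleftrightarrow> ideal_of R P \<and> P \<noteq> R \<and>
     (\<forall>x\<in>R. \<forall>y\<in>R. x * y \<in> P \<longrightarrow> x \<in> P \<or> y \<in> P)"

definition t_prime :: "'a::field set \<Rightarrow> 'a set \<Rightarrow> bool" where
  "t_prime R P \<longleftrightarrow> prime_ideal_of R P \<and> t_ideal R P"

definition t_Max :: "'a::field set \<Rightarrow> 'a set set" where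
  "t_Max R = {M. t_ideal R M \<and> M \<noteq> R \<and>
       (\<forall>J. t_ideal R J \<and> J \<noteq> R \<and> M \<subseteq> J \<longrightarrow> J = M)}"

definition loc :: "'a::field set \<Rightarrow> 'a set \<Rightarrow> 'a set" where
  "loc R P = {a / s | a s. a \<in> R \<and> s \<in> R \<and> s \<notin> P}"

definition dvr :: "'a::field set \<Rightarrow> bool" where
  "dvr V \<longleftrightarrow> (\<exists>v :: 'a \<Rightarrow> int.
     (\<forall>x y. x \<noteq> 0 \<and> y \<noteq> 0 \<longrightarrow> v (x * y) = v x + v y) \<and>
     (\<forall>x y. x \<noteq> 0 \<and> y \<noteq> 0 \<and> x + y \<noteq> 0 \<longrightarrow> min (v x) (v y) \<le> v (x + y)) \<and>
     (\<exists>x. x \<noteq> 0 \<and> v x = 1) \<and>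
     V = {x. x = 0 \<or> 0 \<le> v x})"

definition almost_krull :: "'a::field set \<Rightarrow> bool" where
  "almost_krull R \<longleftrightarrow> (\<forall>M\<in>t_Max R. dvr (loc R M))"

definition t_sharp :: "'a::field set \<Rightarrow> bool" where
  "t_sharp R \<longleftrightarrow> (\<forall>M1 M2. M1 \<subseteq> t_Max R \<and> M2 \<subseteq> t_Max R \<and> M1 \<noteq> M2 \<longrightarrow>
      (\<Inter>M\<in>M1. loc R M) \<noteq> (\<Inter>M\<in>M2. loc R M))"

definition pairwise_incomparable :: "'a set set \<Rightarrow> bool" where
  "pairwise_incomparable S \<longleftrightarrow> (\<forall>P\<in>S. \<forall>Q\<in>S. P \<subseteq> Q \<longrightarrow> P = Q)"

definition t_sharp_sharp :: "'a::field set \<Rightarrow> bool" where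
  "t_sharp_sharp R \<longleftrightarrow> (\<forall>P1 P2.
      P1 \<subseteq> {P. t_prime R P} \<and> P2 \<subseteq> {P. t_prime R P} \<and>
      pairwise_incomparable P1 \<and> pairwise_incomparable P2 \<and> P1 \<noteq> P2 \<longrightarrow>
      (\<Inter>P\<in>P1. loc R P) \<noteq> (\<Inter>P\<in>P2. loc R P))"

text \<open>Krull domain (classical definition): R is the intersection of a family of
  rank-one DVRs of K with finite character (each nonzero x in R is a nonunit in
  only finitely many of them).\<close>
definition krull :: "'a::field set \<Rightarrow> bool" where
  "krull R \<longleftrightarrow> (\<exists>\<V>. (\<forall>V\<in>\<V>. dvr V) \<and> R = \<Inter>\<V> \<and>
      (\<forall>x\<in>R. x \<noteq> 0 \<longrightarrow> finite {V\<in>\<V>. inverse x \<notin> V}))"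

end

theory Submission
  imports Defs
begin

locale dom =
  fixes R :: "'a::field set"
  assumes sub: "subring R" and qf: "quotient_field_is_UNIV R" and nt: "R \<noteq> UNIV"
begin

lemma R0[simp]: "0 \<in> R" and R1[simp]: "1 \<in> R"
  using sub by (auto simp: subring_def)
lemma Radd[intro]: "x \<in> R \<Longrightarrow> y \<in> R \<Longrightarrow> x + y \<in> R"
  using sub by (auto simp: subring_def)
lemma Rdiff[intro]: "x \<in> R \<Longrightarrow> y \<in> R \<Longrightarrow> x - y \<in> R"
  using sub by (auto simp: subring_def)
lemma Rmult[intro]: "x \<in> R \<Longrightarrow> y \<in> R \<Longrightarrow> x * y \<in> R"
  using sub by (auto simp: subring_def)
lemma Rminus[intro]: "x \<in> R \<Longrightarrow> - x \<in> R"
  using Rdiff[of 0 x] by simp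
lemma Rpow[intro]: "x \<in> R \<Longrightarrow> x ^ n \<in> R"
  by (induction n) auto
lemma Rsum[intro]: "(\<And>a. a \<in> F \<Longrightarrow> f a \<in> R) \<Longrightarrow> sum f F \<in> R"
  by (induction F rule: infinite_finite_induct) auto
lemma Rprod[intro]: "(\<And>a. a \<in> F \<Longrightarrow> f a \<in> R) \<Longrightarrow> prod f F \<in> R"
  by (induction F rule: infinite_finite_induct) auto

lemma frac: obtains a b where "a \<in> R" "b \<in> R" "b \<noteq> 0" "x = a / b"
  using qf unfolding quotient_field_is_UNIV_def by blast

lemma ideal_sub: "ideal_of R I \<Longrightarrow> I \<subseteq> R" by (simp add: ideal_of_def)
lemma ideal_0: "ideal_of R I \<Longrightarrow> 0 \<in> I" by (simp add: ideal_of_def)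
lemma ideal_add: "ideal_of R I \<Longrightarrow> x \<in> I \<Longrightarrow> y \<in> I \<Longrightarrow> x + y \<in> I" by (simp add: ideal_of_def)
lemma ideal_mult: "ideal_of R I \<Longrightarrow> r \<in> R \<Longrightarrow> x \<in> I \<Longrightarrow> r * x \<in> I" by (simp add: ideal_of_def)
lemma ideal_mult2: "ideal_of R I \<Longrightarrow> r \<in> R \<Longrightarrow> x \<in> I \<Longrightarrow> x * r \<in> I"
  using ideal_mult[of I r x] by (simp add: mult.commute)
lemma ideal_sum: "ideal_of R I \<Longrightarrow> (\<And>a. a \<in> F \<Longrightarrow> f a \<in> I) \<Longrightarrow> sum f F \<in> I"
proof (induction F rule: infinite_finite_induct)
  case (insert x F)
  hence "f x \<in> I" "sum f F \<in> I" by auto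
  hence "f x + sum f F \<in> I" using insert(4) by (rule ideal_add[rotated -2]) 
  thus ?case using insert(1,2) by simp
qed (simp_all add: ideal_0)
lemma ideal_1: "ideal_of R I \<Longrightarrow> 1 \<in> I \<Longrightarrow> I = R"
proof
  assume I: "ideal_of R I" "1 \<in> I"
  show "I \<subseteq> R" by (rule ideal_sub[OF I(1)])
  show "R \<subseteq> I" using ideal_mult2[OF I(1) _ I(2)] by auto
qed
lemma ideal_R: "ideal_of R R" by (auto simp: ideal_of_def)

lemma gen_sub_R: "F \<subseteq> R \<Longrightarrow> gen_by R F \<subseteq> R"
  unfolding gen_by_def by (auto intro!: Rsum)
lemma gen_contains: assumes "finite F" "a \<in> F" shows "a \<in> gen_by R F"
proof -
  let ?r = "\<lambda>b. if b = a then (1::'a) else 0"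
  have "(\<Sum>b\<in>F. ?r b * b) = (\<Sum>b\<in>F. if b = a then a else 0)"
    by (rule sum.cong) auto
  also have "\<dots> = a" using assms by (simp add: sum.delta)
  finally have "(\<Sum>b\<in>F. ?r b * b) = a" .
  moreover have "\<forall>b\<in>F. ?r b \<in> R" by simp
  ultimately show ?thesis unfolding gen_by_def by (intro CollectI exI[of _ ?r]) simp
qed
lemma gen_subset: "finite F \<Longrightarrow> F \<subseteq> gen_by R F" using gen_contains by blast
lemma gen_in_ideal: assumes "ideal_of R I" "F \<subseteq> I" shows "gen_by R F \<subseteq> I"
  using assms unfolding gen_by_def by (auto intro!: ideal_sum ideal_mult)
lemma gen_nonzero: assumes "finite F" "a \<in> F" "a \<noteq> 0" shows "gen_by R F \<noteq> {0}"
  using gen_contains[OF assms(1,2)] assms(3) by blast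
lemma gen_zero: assumes "gen_by R F \<noteq> {0}" shows "\<exists>a\<in>F. a \<noteq> 0"
proof (rule ccontr)
  assume "\<not> ?thesis"
  hence "gen_by R F = {0}" unfolding gen_by_def
    by (auto intro!: exI[of _ "\<lambda>_. 0"] sum.neutral)
  thus False using assms by simp
qed

lemma colon_anti: "A \<subseteq> B \<Longrightarrow> colon R B \<subseteq> colon R A"
  unfolding colon_def by auto
lemma colon_gen: assumes "finite F" shows "colon R (gen_by R F) = colon R F"
proof
  show "colon R (gen_by R F) \<subseteq> colon R F" using colon_anti gen_subset[OF assms] by blast
  show "colon R F \<subseteq> colon R (gen_by R F)"
  proof
    fix z assume z: "z \<in> colon R F"
    { fix y assume "y \<in> gen_by R F"
      then obtain r where r: "\<forall>a\<in>F. r a \<in> R" "y = (\<Sum>a\<in>F. r a * a)" unfolding gen_by_def by auto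
      have "z * y = (\<Sum>a\<in>F. r a * (z * a))" unfolding r(2) by (simp add: sum_distrib_left algebra_simps)
      also have "\<dots> \<in> R" using r(1) z unfolding colon_def by (intro Rsum) (blast intro: Rmult)
      finally have "z * y \<in> R" . }
    thus "z \<in> colon R (gen_by R F)" unfolding colon_def by auto
  qed
qed
lemma v_gen: "finite F \<Longrightarrow> v_op R (gen_by R F) = v_op R F"
  by (simp add: v_op_def colon_gen)
lemma v_ext: "A \<subseteq> v_op R A" unfolding v_op_def colon_def by (auto simp: mult.commute)
lemma v_mono: "A \<subseteq> B \<Longrightarrow> v_op R A \<subseteq> v_op R B" unfolding v_op_def by (intro colon_anti)
lemma colon_v: "colon R (v_op R A) = colon R A"
proof
  show "colon R (v_op R A) \<subseteq> colon R A" by (rule colon_anti[OF v_ext])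
  show "colon R A \<subseteq> colon R (v_op R A)" unfolding v_op_def colon_def by (auto simp: mult.commute)
qed
lemma v_idem: "v_op R (v_op R A) = v_op R A"
  by (simp add: v_op_def colon_v[unfolded v_op_def])
lemma v_colon: "v_op R (colon R A) = colon R A"
  using colon_v[of A] by (simp add: v_op_def)
lemma one_colon: "A \<subseteq> R \<Longrightarrow> 1 \<in> colon R A" unfolding colon_def by auto
lemma v_sub_R: assumes "A \<subseteq> R" shows "v_op R A \<subseteq> R"
proof
  fix z assume "z \<in> v_op R A"
  hence "z * 1 \<in> R" using one_colon[OF assms] unfolding v_op_def colon_def by blast
  thus "z \<in> R" by simp
qed
lemma colon_R: "colon R R = R"
proof
  show "colon R R \<subseteq> R" proof fix z assume "z \<in> colon R R" hence "z * 1 \<in> R" unfolding colon_def using R1 by blast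
    thus "z \<in> R" by simp qed
  show "R \<subseteq> colon R R" unfolding colon_def by (auto intro: Rmult)
qed
lemma colon_add: "x \<in> colon R A \<Longrightarrow> y \<in> colon R A \<Longrightarrow> x + y \<in> colon R A"
proof -
  assume a: "x \<in> colon R A" "y \<in> colon R A"
  { fix z assume "z \<in> A"
    hence "x * z \<in> R" "y * z \<in> R" using a unfolding colon_def by auto
    hence "(x + y) * z \<in> R" by (simp add: distrib_right Radd) }
  thus ?thesis unfolding colon_def by blast
qed
lemma colon_mult: "r \<in> R \<Longrightarrow> x \<in> colon R A \<Longrightarrow> r * x \<in> colon R A"
  unfolding colon_def by (auto simp: mult.assoc)
lemma colon_0: "0 \<in> colon R A" unfolding colon_def by auto
lemma colon_ideal: "colon R A \<subseteq> R \<Longrightarrow> ideal_of R (colon R A)"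
  unfolding ideal_of_def by (auto intro: colon_0 colon_add colon_mult)
lemma v_ideal: "A \<subseteq> R \<Longrightarrow> ideal_of R (v_op R A)"
  unfolding v_op_def by (rule colon_ideal) (use v_sub_R in \<open>auto simp: v_op_def\<close>)

end

context dom begin

lemma t_op_iff: "z \<in> t_op R A \<longleftrightarrow> (\<exists>F. finite F \<and> gen_by R F \<subseteq> A \<and> gen_by R F \<noteq> {0} \<and> z \<in> v_op R F)"
proof
  assume "z \<in> t_op R A"
  then obtain J where J: "z \<in> v_op R J" "J \<subseteq> A" "J \<noteq> {0}" "fin_gen R J" unfolding t_op_def by blast
  then obtain F where F: "finite F" "J = gen_by R F" unfolding fin_gen_def by blast
  show "\<exists>F. finite F \<and> gen_by R F \<subseteq> A \<and> gen_by R F \<noteq> {0} \<and> z \<in> v_op R F"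
    using J F v_gen[OF F(1)] by (intro exI[of _ F]) simp
next
  assume "\<exists>F. finite F \<and> gen_by R F \<subseteq> A \<and> gen_by R F \<noteq> {0} \<and> z \<in> v_op R F"
  then obtain F where F: "finite F" "gen_by R F \<subseteq> A" "gen_by R F \<noteq> {0}" "z \<in> v_op R F" by blast
  hence "z \<in> v_op R (gen_by R F)" "fin_gen R (gen_by R F)" using v_gen[OF F(1)] unfolding fin_gen_def by auto
  thus "z \<in> t_op R A" unfolding t_op_def using F by blast
qed

lemma nonzero_elem: assumes "ideal_of R I" "I \<noteq> {0}" shows "\<exists>a\<in>I. a \<noteq> 0"
proof (rule ccontr)
  assume "\<not> ?thesis" hence "I \<subseteq> {0}" by blast
  thus False using assms ideal_0[OF assms(1)] by blast
qed

lemma one_v_nonzero: assumes "1 \<in> v_op R F" shows "\<exists>a\<in>F. a \<noteq> 0"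
proof (rule ccontr)
  assume "\<not> ?thesis"
  hence "colon R F = UNIV" unfolding colon_def by auto
  hence "\<forall>y. 1 * y \<in> R" using assms unfolding v_op_def colon_def by auto
  thus False using nt by auto
qed

lemma t_ideal_v: assumes "t_ideal R I" "finite F" "gen_by R F \<subseteq> I" "gen_by R F \<noteq> {0}"
  shows "v_op R F \<subseteq> I"
proof
  fix z assume "z \<in> v_op R F"
  hence "z \<in> t_op R I" using assms by (auto simp: t_op_iff)
  thus "z \<in> I" using assms(1) unfolding t_ideal_def by simp
qed

lemma t_ideal_ideal: "t_ideal R I \<Longrightarrow> ideal_of R I" by (simp add: t_ideal_def)

lemma t_ideal_vF: assumes "t_ideal R I" "finite F" "F \<subseteq> I" "a \<in> F" "a \<noteq> 0"
  shows "v_op R F \<subseteq> I"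
  using t_ideal_v[OF assms(1,2)] gen_in_ideal[OF t_ideal_ideal[OF assms(1)] assms(3)]
    gen_nonzero[OF assms(2,4,5)] by blast

lemma t_ext: assumes "ideal_of R A" "A \<noteq> {0}" shows "A \<subseteq> t_op R A"
proof
  fix a assume a: "a \<in> A"
  obtain b where b: "b \<in> A" "b \<noteq> 0" using assms(2) ideal_0[OF assms(1)] by blast
  show "a \<in> t_op R A"
  proof (cases "a = 0")
    case True
    have "gen_by R {b} \<subseteq> A" using gen_in_ideal[OF assms(1)] b by auto
    moreover have "gen_by R {b} \<noteq> {0}" using gen_nonzero[of "{b}" b] b by auto
    moreover have "a \<in> v_op R {b}" using True colon_0 unfolding v_op_def by simp
    ultimately show ?thesis unfolding t_op_iff by (intro exI[of _ "{b}"]) simp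
  next
    case False
    have "gen_by R {a} \<subseteq> A" using gen_in_ideal[OF assms(1)] a by auto
    moreover have "gen_by R {a} \<noteq> {0}" using gen_nonzero[of "{a}" a] False by auto
    moreover have "a \<in> v_op R {a}" using v_ext by blast
    ultimately show ?thesis unfolding t_op_iff by (intro exI[of _ "{a}"]) simp
  qed
qed

lemma t_sub_v: "t_op R A \<subseteq> v_op R A"
proof
  fix z assume "z \<in> t_op R A"
  then obtain F where F: "finite F" "gen_by R F \<subseteq> A" "z \<in> v_op R F" unfolding t_op_iff by blast
  have "F \<subseteq> A" using gen_subset[OF F(1)] F(2) by blast
  thus "z \<in> v_op R A" using v_mono F(3) by blast
qed

lemma t_sub_R: assumes "A \<subseteq> R" shows "t_op R A \<subseteq> R"
  using t_sub_v v_sub_R[OF assms] by blast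

lemma t_op_ideal: assumes "ideal_of R A" "A \<noteq> {0}" shows "ideal_of R (t_op R A)"
proof -
  have sub: "t_op R A \<subseteq> R" using t_sub_R ideal_sub[OF assms(1)] by blast
  have z: "0 \<in> t_op R A" using t_ext[OF assms] ideal_0[OF assms(1)] by blast
  have add: "x + y \<in> t_op R A" if x: "x \<in> t_op R A" and y: "y \<in> t_op R A" for x y
  proof -
    obtain F where F: "finite F" "gen_by R F \<subseteq> A" "gen_by R F \<noteq> {0}" "x \<in> v_op R F"
      using x unfolding t_op_iff by blast
    obtain G where G: "finite G" "gen_by R G \<subseteq> A" "gen_by R G \<noteq> {0}" "y \<in> v_op R G"
      using y unfolding t_op_iff by blast
    have FG: "F \<union> G \<subseteq> A" using gen_subset F(1,2) G(1,2) by blast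
    obtain a where a: "a \<in> F" "a \<noteq> 0" using gen_zero[OF F(3)] by blast
    have "gen_by R (F \<union> G) \<subseteq> A" by (rule gen_in_ideal[OF assms(1) FG])
    moreover have "gen_by R (F \<union> G) \<noteq> {0}" using gen_nonzero[of "F \<union> G" a] a F(1) G(1) by auto
    moreover have "x \<in> v_op R (F \<union> G)" "y \<in> v_op R (F \<union> G)"
      using v_mono[of F "F \<union> G"] v_mono[of G "F \<union> G"] F(4) G(4) by auto
    hence "x + y \<in> v_op R (F \<union> G)" unfolding v_op_def by (rule colon_add)
    ultimately show ?thesis unfolding t_op_iff using F(1) G(1) by (intro exI[of _ "F \<union> G"]) simp
  qed
  have mult: "r * x \<in> t_op R A" if r: "r \<in> R" and x: "x \<in> t_op R A" for r x
  proof -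
    obtain F where F: "finite F" "gen_by R F \<subseteq> A" "gen_by R F \<noteq> {0}" "x \<in> v_op R F"
      using x unfolding t_op_iff by blast
    have "r * x \<in> v_op R F" using F(4) r unfolding v_op_def by (rule colon_mult[rotated])
    thus ?thesis unfolding t_op_iff using F by blast
  qed
  show ?thesis unfolding ideal_of_def using sub z add mult by blast
qed

lemma t_idem: assumes "ideal_of R A" "A \<noteq> {0}" shows "t_op R (t_op R A) = t_op R A"
proof
  have "A \<subseteq> t_op R A" by (rule t_ext[OF assms])
  hence ne: "t_op R A \<noteq> {0}" using assms(2) ideal_0[OF assms(1)] by blast
  show "t_op R A \<subseteq> t_op R (t_op R A)" by (rule t_ext[OF t_op_ideal[OF assms] ne])
  show "t_op R (t_op R A) \<subseteq> t_op R A"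
  proof
    fix z assume "z \<in> t_op R (t_op R A)"
    then obtain F where F: "finite F" "gen_by R F \<subseteq> t_op R A" "gen_by R F \<noteq> {0}" "z \<in> v_op R F"
      unfolding t_op_iff by blast
    have FA: "F \<subseteq> t_op R A" using gen_subset[OF F(1)] F(2) by blast
    have "\<forall>f\<in>F. \<exists>G. finite G \<and> gen_by R G \<subseteq> A \<and> gen_by R G \<noteq> {0} \<and> f \<in> v_op R G"
    proof
      fix f assume "f \<in> F" hence "f \<in> t_op R A" using FA by blast
      thus "\<exists>G. finite G \<and> gen_by R G \<subseteq> A \<and> gen_by R G \<noteq> {0} \<and> f \<in> v_op R G" unfolding t_op_iff .
    qed
    from bchoice[OF this] obtain G where G0: "\<forall>f\<in>F. finite (G f) \<and> gen_by R (G f) \<subseteq> A \<and> gen_by R (G f) \<noteq> {0} \<and> f \<in> v_op R (G f)"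
      by blast
    hence G: "\<And>f. f \<in> F \<Longrightarrow> finite (G f) \<and> gen_by R (G f) \<subseteq> A \<and> gen_by R (G f) \<noteq> {0} \<and> f \<in> v_op R (G f)"
      by blast
    define H where "H = (\<Union>f\<in>F. G f)"
    have Hfin: "finite H" unfolding H_def using F(1) G by blast
    have HA: "H \<subseteq> A" unfolding H_def using G gen_subset by blast
    obtain f0 where f0: "f0 \<in> F" "f0 \<noteq> 0" using gen_zero[OF F(3)] by blast
    obtain b where b: "b \<in> G f0" "b \<noteq> 0" using gen_zero G[OF f0(1)] by blast
    have bH: "b \<in> H" unfolding H_def using b f0 by blast
    have "F \<subseteq> v_op R H"
    proof
      fix f assume f: "f \<in> F"
      have "G f \<subseteq> H" unfolding H_def using f by blast
      thus "f \<in> v_op R H" using v_mono G[OF f] by blast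
    qed
    hence "v_op R F \<subseteq> v_op R (v_op R H)" by (rule v_mono)
    hence "v_op R F \<subseteq> v_op R H" unfolding v_idem .
    hence "z \<in> v_op R H" using F(4) by blast
    moreover have "gen_by R H \<subseteq> A" by (rule gen_in_ideal[OF assms(1) HA])
    moreover have "gen_by R H \<noteq> {0}" by (rule gen_nonzero[OF Hfin bH b(2)])
    ultimately show "z \<in> t_op R A" unfolding t_op_iff using Hfin by blast
  qed
qed

lemma t_ideal_t_op: assumes "ideal_of R A" "A \<noteq> {0}" shows "t_ideal R (t_op R A)"
proof -
  have "A \<subseteq> t_op R A" by (rule t_ext[OF assms])
  hence ne: "t_op R A \<noteq> {0}" using assms(2) ideal_0[OF assms(1)] by blast
  thus ?thesis unfolding t_ideal_def using t_op_ideal[OF assms] t_idem[OF assms] by blast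
qed

lemma t_ideal_colon: assumes "colon R S \<subseteq> R" "colon R S \<noteq> {0}" shows "t_ideal R (colon R S)"
proof -
  have I: "ideal_of R (colon R S)" by (rule colon_ideal[OF assms(1)])
  have "t_op R (colon R S) \<subseteq> colon R S" using t_sub_v[of "colon R S"] v_colon by simp
  moreover have "colon R S \<subseteq> t_op R (colon R S)" by (rule t_ext[OF I assms(2)])
  ultimately show ?thesis unfolding t_ideal_def using I assms(2) by blast
qed

lemma tmax_t: "M \<in> t_Max R \<Longrightarrow> t_ideal R M" by (simp add: t_Max_def)
lemma tmax_ideal: "M \<in> t_Max R \<Longrightarrow> ideal_of R M" by (simp add: t_Max_def t_ideal_def)
lemma tmax_ne: "M \<in> t_Max R \<Longrightarrow> M \<noteq> R" by (simp add: t_Max_def)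
lemma tmax_1: "M \<in> t_Max R \<Longrightarrow> 1 \<notin> M" using ideal_1 tmax_ideal tmax_ne by blast
lemma tmax_0: "M \<in> t_Max R \<Longrightarrow> 0 \<in> M" using ideal_0 tmax_ideal by blast
lemma tmax_sub: "M \<in> t_Max R \<Longrightarrow> M \<subseteq> R" using ideal_sub tmax_ideal by blast
lemma tmax_max: "M \<in> t_Max R \<Longrightarrow> t_ideal R J \<Longrightarrow> J \<noteq> R \<Longrightarrow> M \<subseteq> J \<Longrightarrow> J = M"
  by (simp add: t_Max_def)
lemma tmax_incomp: "M \<in> t_Max R \<Longrightarrow> N \<in> t_Max R \<Longrightarrow> M \<subseteq> N \<Longrightarrow> M = N"
  using tmax_max[of M N] tmax_t[of N] tmax_ne[of N] by auto

lemma zorn_tmax: assumes "t_ideal R A" "A \<noteq> R" shows "\<exists>M\<in>t_Max R. A \<subseteq> M"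
proof -
  define \<A> where "\<A> = {B. t_ideal R B \<and> B \<noteq> R \<and> A \<subseteq> B}"
  have "\<exists>M\<in>\<A>. \<forall>X\<in>\<A>. M \<subseteq> X \<longrightarrow> X = M"
  proof (rule subset_Zorn_nonempty)
    show "\<A> \<noteq> {}" using assms unfolding \<A>_def by blast
  next
    fix C assume C: "C \<noteq> {}" "subset.chain \<A> C"
    have CA: "C \<subseteq> \<A>" using C(2) unfolding subset.chain_def by blast
    have ch: "\<And>B1 B2. B1 \<in> C \<Longrightarrow> B2 \<in> C \<Longrightarrow> B1 \<subseteq> B2 \<or> B2 \<subseteq> B1"
      using C(2) unfolding subset.chain_def by blast
    have mem: "\<And>B. B \<in> C \<Longrightarrow> t_ideal R B \<and> B \<noteq> R \<and> A \<subseteq> B" using CA unfolding \<A>_def by blast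
    have id: "\<And>B. B \<in> C \<Longrightarrow> ideal_of R B" using mem t_ideal_ideal by blast
    obtain B0 where B0: "B0 \<in> C" using C(1) by blast
    have I: "ideal_of R (\<Union>C)"
      unfolding ideal_of_def
    proof (intro conjI ballI)
      show "\<Union>C \<subseteq> R" using id ideal_sub by blast
      show "0 \<in> \<Union>C" using id ideal_0 B0 by blast
    next
      fix x y assume "x \<in> \<Union>C" "y \<in> \<Union>C"
      then obtain B1 B2 where B: "B1 \<in> C" "B2 \<in> C" "x \<in> B1" "y \<in> B2" by blast
      show "x + y \<in> \<Union>C"
      proof (cases "B1 \<subseteq> B2")
        case True thus ?thesis using B ideal_add[OF id[OF B(2)], of x y] by blast
      next
        case False hence "B2 \<subseteq> B1" using ch B by blast
        thus ?thesis using B ideal_add[OF id[OF B(1)], of x y] by blast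
      qed
    next
      fix r x assume "r \<in> R" "x \<in> \<Union>C"
      thus "r * x \<in> \<Union>C" using id ideal_mult by blast
    qed
    have AU: "A \<subseteq> \<Union>C" using mem B0 by blast
    obtain a where a: "a \<in> A" "a \<noteq> 0" using nonzero_elem[of A] assms(1) unfolding t_ideal_def by blast
    have ne: "\<Union>C \<noteq> {0}" using AU a by blast
    have "t_op R (\<Union>C) \<subseteq> \<Union>C"
    proof
      fix z assume "z \<in> t_op R (\<Union>C)"
      then obtain F where F: "finite F" "gen_by R F \<subseteq> \<Union>C" "gen_by R F \<noteq> {0}" "z \<in> v_op R F"
        unfolding t_op_iff by blast
      have "F \<subseteq> \<Union>C" using gen_subset[OF F(1)] F(2) by blast
      then obtain B where B: "B \<in> C" "F \<subseteq> B" using finite_subset_Union_chain[OF F(1) _ C(1,2)] by blast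
      have "gen_by R F \<subseteq> B" by (rule gen_in_ideal[OF id[OF B(1)] B(2)])
      hence "v_op R F \<subseteq> B" using t_ideal_v[OF _ F(1) _ F(3)] mem[OF B(1)] by blast
      thus "z \<in> \<Union>C" using F(4) B(1) by blast
    qed
    hence t: "t_ideal R (\<Union>C)" unfolding t_ideal_def using I ne t_ext[OF I ne] by blast
    have "1 \<notin> \<Union>C" using mem id ideal_1 by blast
    hence "\<Union>C \<noteq> R" by auto
    thus "\<Union>C \<in> \<A>" unfolding \<A>_def using t AU by blast
  qed
  then obtain M where M: "M \<in> \<A>" "\<forall>X\<in>\<A>. M \<subseteq> X \<longrightarrow> X = M" by blast
  have "M \<in> t_Max R" unfolding t_Max_def
  proof (intro CollectI conjI allI impI)
    show "t_ideal R M" "M \<noteq> R" using M(1) unfolding \<A>_def by auto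
  next
    fix J assume "t_ideal R J \<and> J \<noteq> R \<and> M \<subseteq> J"
    moreover have "A \<subseteq> M" using M(1) unfolding \<A>_def by auto
    ultimately have "J \<in> \<A>" unfolding \<A>_def by blast
    thus "J = M" using M(2) \<open>t_ideal R J \<and> J \<noteq> R \<and> M \<subseteq> J\<close> by blast
  qed
  thus ?thesis using M(1) unfolding \<A>_def by blast
qed

end

lemma val_1: assumes vm: "\<forall>x y. x \<noteq> 0 \<and> y \<noteq> 0 \<longrightarrow> v (x * y) = v x + v y"
  shows "v (1::'a::field) = (0::int)"
  using vm[rule_format, of 1 1] by simp
lemma val_inv: assumes vm: "\<forall>x y. x \<noteq> 0 \<and> y \<noteq> 0 \<longrightarrow> v (x * y) = v x + v y"
  and "(x::'a::field) \<noteq> 0" shows "v (inverse x) = - (v x::int)"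
  using vm[rule_format, of x "inverse x"] assms(2) val_1[OF vm] by simp
lemma val_div: assumes vm: "\<forall>x y. x \<noteq> 0 \<and> y \<noteq> 0 \<longrightarrow> v (x * y) = v x + v y"
  and "(x::'a::field) \<noteq> 0" "y \<noteq> 0" shows "v (x / y) = v x - (v y::int)"
  using vm[rule_format, of x "inverse y"] assms(2,3) val_inv[OF vm assms(3)] by (simp add: divide_inverse)
lemma val_pow: assumes vm: "\<forall>x y. x \<noteq> 0 \<and> y \<noteq> 0 \<longrightarrow> v (x * y) = v x + v y"
  and "(x::'a::field) \<noteq> 0" shows "v (x ^ n) = int n * (v x::int)"
proof (induction n)
  case 0 thus ?case using val_1[OF vm] by simp
next
  case (Suc n)
  have "v (x ^ Suc n) = v x + v (x ^ n)" using vm[rule_format, of x "x ^ n"] assms(2) by simp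
  thus ?case using Suc by (simp add: algebra_simps)
qed

lemma dvrE: assumes "dvr V"
  obtains v :: "'a::field \<Rightarrow> int" where
    "\<forall>x y. x \<noteq> 0 \<and> y \<noteq> 0 \<longrightarrow> v (x * y) = v x + v y"
    "\<forall>x y. x \<noteq> 0 \<and> y \<noteq> 0 \<and> x + y \<noteq> 0 \<longrightarrow> min (v x) (v y) \<le> v (x + y)"
    "\<exists>x. x \<noteq> 0 \<and> v x = 1" "V = {x. x = 0 \<or> 0 \<le> v x}"
  using assms unfolding dvr_def by blast

lemma dvr_inv: assumes "dvr V" "x \<notin> V" shows "inverse x \<in> V"
proof -
  obtain v :: "'a \<Rightarrow> int" where vm: "\<forall>x y. x \<noteq> 0 \<and> y \<noteq> 0 \<longrightarrow> v (x * y) = v x + v y"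
    and V: "V = {x. x = 0 \<or> 0 \<le> v x}" using dvrE[OF assms(1)] by metis
  have "x \<noteq> 0" "v x < 0" using assms(2) V by auto
  thus ?thesis using val_inv[OF vm] V by auto
qed

context dom begin

lemma locE: assumes "x \<in> loc R M" obtains a s where "a \<in> R" "s \<in> R" "s \<notin> M" "x = a / s"
  using assms unfolding loc_def by blast
lemma locI: "a \<in> R \<Longrightarrow> s \<in> R \<Longrightarrow> s \<notin> M \<Longrightarrow> a / s \<in> loc R M"
  unfolding loc_def by blast
lemma loc_R: "r \<in> R \<Longrightarrow> 1 \<notin> M \<Longrightarrow> r \<in> loc R M"
  using locI[of r 1 M] by simp
lemma loc_inv: "s \<in> R \<Longrightarrow> s \<notin> M \<Longrightarrow> inverse s \<in> loc R M"
  using locI[of 1 s M] by (simp add: divide_inverse)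
lemma loc_mult: assumes "prime_ideal_of R M" "x \<in> loc R M" "y \<in> loc R M" shows "x * y \<in> loc R M"
proof -
  obtain a s where a: "a \<in> R" "s \<in> R" "s \<notin> M" "x = a / s" using locE[OF assms(2)] .
  obtain b t where b: "b \<in> R" "t \<in> R" "t \<notin> M" "y = b / t" using locE[OF assms(3)] .
  have "s * t \<notin> M" using assms(1) a b unfolding prime_ideal_of_def by blast
  hence "(a * b) / (s * t) \<in> loc R M" using a b by (intro locI) auto
  thus ?thesis using a b by simp
qed

lemma prime_0: "prime_ideal_of R P \<Longrightarrow> 0 \<in> P" unfolding prime_ideal_of_def using ideal_0 by blast
lemma prime_1: "prime_ideal_of R P \<Longrightarrow> 1 \<notin> P" unfolding prime_ideal_of_def using ideal_1 by blast
lemma prime_pow: assumes "prime_ideal_of R P" "x \<in> R" "x ^ n \<in> P" shows "x \<in> P"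
  using assms(3)
proof (induction n)
  case 0 thus ?case using prime_1[OF assms(1)] by simp
next
  case (Suc n)
  have "x * x ^ n \<in> P" using Suc.prems by simp
  hence "x \<in> P \<or> x ^ n \<in> P" using assms(1,2) Rpow unfolding prime_ideal_of_def by blast
  thus ?case using Suc.IH by blast
qed

lemma tmax_prime: assumes M: "M \<in> t_Max R" shows "prime_ideal_of R M"
proof -
  have IM: "ideal_of R M" by (rule tmax_ideal[OF M])
  have key: "\<exists>F. finite F \<and> (\<forall>f\<in>F. \<exists>m r. m \<in> M \<and> r \<in> R \<and> f = m + r * a) \<and> 1 \<in> v_op R F"
    if a: "a \<in> R" "a \<notin> M" for a
  proof -
    define A where "A = {m + r * a | m r. m \<in> M \<and> r \<in> R}"
    have IA: "ideal_of R A" unfolding ideal_of_def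
    proof (intro conjI ballI)
      show "A \<subseteq> R" unfolding A_def using tmax_sub[OF M] a by blast
      show "0 \<in> A" unfolding A_def using tmax_0[OF M] by (intro CollectI exI[of _ 0]) auto
    next
      fix x y assume "x \<in> A" "y \<in> A"
      then obtain m1 r1 m2 r2 where "m1 \<in> M" "r1 \<in> R" "x = m1 + r1 * a" "m2 \<in> M" "r2 \<in> R" "y = m2 + r2 * a"
        unfolding A_def by blast
      moreover hence "x + y = (m1 + m2) + (r1 + r2) * a" by (simp add: algebra_simps)
      ultimately show "x + y \<in> A" unfolding A_def using ideal_add[OF IM] by blast
    next
      fix s x assume s: "s \<in> R" and "x \<in> A"
      then obtain m r where "m \<in> M" "r \<in> R" "x = m + r * a" unfolding A_def by blast
      moreover hence "s * x = s * m + (s * r) * a" by (simp add: algebra_simps)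
      ultimately show "s * x \<in> A" unfolding A_def using ideal_mult[OF IM s] s by blast
    qed
    have MA: "M \<subseteq> A" unfolding A_def by (force)
    have aA: "a \<in> A" unfolding A_def using tmax_0[OF M] by (intro CollectI exI[of _ 0] exI[of _ 1]) auto
    have "M \<noteq> {0}" using tmax_t[OF M] unfolding t_ideal_def by blast
    hence Ane: "A \<noteq> {0}" using MA tmax_0[OF M] by blast
    have T: "t_ideal R (t_op R A)" by (rule t_ideal_t_op[OF IA Ane])
    have AT: "A \<subseteq> t_op R A" by (rule t_ext[OF IA Ane])
    have "t_op R A = R"
    proof (rule ccontr)
      assume "t_op R A \<noteq> R"
      hence "t_op R A = M" using tmax_max[OF M T] MA AT by blast
      thus False using aA AT a by blast
    qed
    hence "1 \<in> t_op R A" by simp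
    then obtain F where F: "finite F" "gen_by R F \<subseteq> A" "1 \<in> v_op R F" unfolding t_op_iff by blast
    have "F \<subseteq> A" using gen_subset[OF F(1)] F(2) by blast
    hence "\<forall>f\<in>F. \<exists>m r. m \<in> M \<and> r \<in> R \<and> f = m + r * a"
    proof (intro ballI)
      fix f assume "F \<subseteq> A" "f \<in> F"
      hence "f \<in> A" by blast
      thus "\<exists>m r. m \<in> M \<and> r \<in> R \<and> f = m + r * a" unfolding A_def by blast
    qed
    thus ?thesis using F(1,3) by blast
  qed
  have prime: "a \<in> M \<or> b \<in> M" if ab: "a \<in> R" "b \<in> R" "a * b \<in> M" for a b
  proof (rule ccontr)
    assume "\<not> ?thesis"
    hence na: "a \<notin> M" and nb: "b \<notin> M" by auto
    obtain F where F: "finite F" "\<forall>f\<in>F. \<exists>m r. m \<in> M \<and> r \<in> R \<and> f = m + r * a" "1 \<in> v_op R F"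
      using key[OF ab(1) na] by blast
    obtain G where G: "finite G" "\<forall>f\<in>G. \<exists>m r. m \<in> M \<and> r \<in> R \<and> f = m + r * b" "1 \<in> v_op R G"
      using key[OF ab(2) nb] by blast
    define H where "H = {f * g | f g. f \<in> F \<and> g \<in> G}"
    have Hfin: "finite H" unfolding H_def using F(1) G(1) by (intro finite_image_set2) simp_all
    have HM: "H \<subseteq> M"
    proof
      fix h assume "h \<in> H"
      then obtain f g where fg: "f \<in> F" "g \<in> G" "h = f * g" unfolding H_def by blast
      obtain m r where mr: "m \<in> M" "r \<in> R" "f = m + r * a" using F(2) fg(1) by blast
      obtain m' r' where mr': "m' \<in> M" "r' \<in> R" "g = m' + r' * b" using G(2) fg(2) by blast
      have gR: "g \<in> R" using mr' ab tmax_sub[OF M] by blast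
      have "h = m * g + (r * a) * m' + (r * r') * (a * b)" using fg(3) mr(3) mr'(3) by (simp add: algebra_simps)
      moreover have "m * g \<in> M" using ideal_mult2[OF IM gR mr(1)] .
      moreover have "(r * a) * m' \<in> M" using ideal_mult[OF IM _ mr'(1)] mr(2) ab(1) by blast
      moreover have "(r * r') * (a * b) \<in> M" using ideal_mult[OF IM _ ab(3)] mr(2) mr'(2) by blast
      ultimately show "h \<in> M" using ideal_add[OF IM] by metis
    qed
    have "1 \<in> v_op R H"
    proof -
      have "1 * w \<in> R" if w: "w \<in> colon R H" for w
      proof -
        have "w * f \<in> colon R G" if f: "f \<in> F" for f
        proof -
          have "\<forall>g\<in>G. w * f * g \<in> R"
          proof
            fix g assume "g \<in> G"
            hence "f * g \<in> H" unfolding H_def using f by blast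
            thus "w * f * g \<in> R" using w unfolding colon_def by (simp add: mult.assoc)
          qed
          thus ?thesis unfolding colon_def by blast
        qed
        hence "1 * (w * f) \<in> R" if "f \<in> F" for f using G(3) that unfolding v_op_def colon_def
          by blast
        hence "w \<in> colon R F" unfolding colon_def by simp
        thus ?thesis using F(3) unfolding v_op_def colon_def by blast
      qed
      thus ?thesis unfolding v_op_def colon_def by blast
    qed
    obtain f where f: "f \<in> F" "f \<noteq> 0" using one_v_nonzero[OF F(3)] by blast
    obtain g where g: "g \<in> G" "g \<noteq> 0" using one_v_nonzero[OF G(3)] by blast
    have "f * g \<in> H" "f * g \<noteq> 0" unfolding H_def using f g by auto
    hence "v_op R H \<subseteq> M" using t_ideal_vF[OF tmax_t[OF M] Hfin HM] by blast
    thus False using \<open>1 \<in> v_op R H\<close> tmax_1[OF M] by blast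
  qed
  show ?thesis unfolding prime_ideal_of_def using IM tmax_ne[OF M] prime by blast
qed

lemma tmax_tprime: "M \<in> t_Max R \<Longrightarrow> t_prime R M"
  unfolding t_prime_def using tmax_prime tmax_t by blast

lemma inter_loc: "(\<Inter>M\<in>t_Max R. loc R M) = R"
proof
  show "R \<subseteq> (\<Inter>M\<in>t_Max R. loc R M)" using loc_R tmax_1 by blast
  show "(\<Inter>M\<in>t_Max R. loc R M) \<subseteq> R"
  proof
    fix x assume x: "x \<in> (\<Inter>M\<in>t_Max R. loc R M)"
    define C where "C = colon R {1, x}"
    have CR: "C \<subseteq> R" unfolding C_def colon_def by auto
    obtain a b where ab: "a \<in> R" "b \<in> R" "b \<noteq> 0" "x = a / b" using frac .
    have "b \<in> C" unfolding C_def colon_def using ab by auto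
    hence Cne: "C \<noteq> {0}" using ab(3) by blast
    have T: "t_ideal R C" unfolding C_def by (rule t_ideal_colon[OF CR[unfolded C_def] Cne[unfolded C_def]])
    show "x \<in> R"
    proof (cases "C = R")
      case True
      hence "1 \<in> C" by simp
      thus ?thesis unfolding C_def colon_def by simp
    next
      case False
      then obtain M where M: "M \<in> t_Max R" "C \<subseteq> M" using zorn_tmax[OF T] by blast
      obtain c s where cs: "c \<in> R" "s \<in> R" "s \<notin> M" "x = c / s" using locE x M(1) by blast
      have "s \<noteq> 0" using cs(3) tmax_0[OF M(1)] by blast
      hence "s * x = c" using cs(4) by simp
      hence "s \<in> C" unfolding C_def colon_def using cs by auto
      thus ?thesis using M(2) cs(3) by blast
    qed
  qed
qed

end
context dom begin

lemma dvr_prime_eq: assumes M: "M \<in> t_Max R" and V: "dvr (loc R M)"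
  and P: "prime_ideal_of R P" "P \<noteq> {0}" "P \<subseteq> M" shows "P = M"
proof -
  obtain v :: "'a \<Rightarrow> int" where vm: "\<forall>x y. x \<noteq> 0 \<and> y \<noteq> 0 \<longrightarrow> v (x * y) = v x + v y"
    and Vd: "loc R M = {x. x = 0 \<or> 0 \<le> v x}" using dvrE[OF V] by metis
  have M1: "1 \<notin> M" by (rule tmax_1[OF M])
  have pos: "0 < v r" if r: "r \<in> M" "r \<noteq> 0" for r
  proof (rule ccontr)
    assume "\<not> 0 < v r"
    hence "0 \<le> v (inverse r)" using val_inv[OF vm r(2)] by simp
    hence "inverse r \<in> loc R M" using Vd by blast
    then obtain c s where cs: "c \<in> R" "s \<in> R" "s \<notin> M" "inverse r = c / s" by (rule locE)
    have "s \<noteq> 0" using cs(3) tmax_0[OF M] by blast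
    hence "s = r * c" using cs(4) r(2) by (simp add: field_simps)
    moreover have "r * c \<in> M" using ideal_mult2[OF tmax_ideal[OF M] cs(1) r(1)] .
    ultimately show False using cs(3) by simp
  qed
  show ?thesis
  proof
    show "M \<subseteq> P"
    proof
      fix r assume r: "r \<in> M"
      show "r \<in> P"
      proof (cases "r = 0")
        case True thus ?thesis using prime_0[OF P(1)] by simp
      next
        case False
        obtain p where p: "p \<in> P" "p \<noteq> 0" using P(1,2) prime_0[OF P(1)] by blast
        have pM: "p \<in> M" using p P(3) by blast
        define e where "e = v r" define f where "f = v p"
        have e: "0 < e" unfolding e_def using pos r False by blast
        have f: "0 < f" unfolding f_def using pos pM p(2) by blast
        define w where "w = r ^ nat f / p ^ nat e"
        have "v w = int (nat f) * e - int (nat e) * f"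
          unfolding w_def e_def f_def using val_div[OF vm] val_pow[OF vm] False p(2) by simp
        hence "v w = 0" using e f by simp
        hence "w \<in> {x. x = 0 \<or> 0 \<le> v x}" by simp
        hence "w \<in> loc R M" using Vd by simp
        then obtain c s where cs: "c \<in> R" "s \<in> R" "s \<notin> M" "w = c / s" by (rule locE)
        have "s \<noteq> 0" using cs(3) tmax_0[OF M] by blast
        hence eq: "s * r ^ nat f = c * p ^ nat e" using cs(4) p(2) unfolding w_def by (simp add: field_simps)
        have IP: "ideal_of R P" using P(1) unfolding prime_ideal_of_def by blast
        have pR: "p \<in> R" using pM tmax_sub[OF M] by blast
        have "0 < nat e" using e by simp
        then obtain k where k: "nat e = Suc k" using gr0_implies_Suc by blast
        have "p ^ nat e = p * p ^ k" by (simp add: k)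
        hence "p ^ nat e \<in> P" using ideal_mult2[OF IP Rpow[OF pR] p(1)] by simp
        hence "c * p ^ nat e \<in> P" using ideal_mult[OF IP cs(1)] by blast
        hence "s * r ^ nat f \<in> P" using eq by simp
        moreover have "s \<notin> P" using cs(3) P(3) by blast
        moreover have rR: "r \<in> R" using r tmax_sub[OF M] by blast
        ultimately have "r ^ nat f \<in> P" using P(1) cs(2) Rpow[OF rR] unfolding prime_ideal_of_def by blast
        thus ?thesis using prime_pow[OF P(1) rR] by blast
      qed
    qed
  qed (rule P(3))
qed

lemma tprime_tmax: assumes AK: "almost_krull R" and P: "t_prime R P" shows "P \<in> t_Max R"
proof -
  have Pp: "prime_ideal_of R P" and Pt: "t_ideal R P" using P unfolding t_prime_def by auto
  have "P \<noteq> R" using Pp unfolding prime_ideal_of_def by blast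
  then obtain M where M: "M \<in> t_Max R" "P \<subseteq> M" using zorn_tmax[OF Pt] by blast
  have "P \<noteq> {0}" using Pt unfolding t_ideal_def by blast
  hence "P = M" using dvr_prime_eq[OF M(1) _ Pp _ M(2)] AK M(1) unfolding almost_krull_def by blast
  thus ?thesis using M(1) by simp
qed

lemma tmax_pairwise: "S \<subseteq> t_Max R \<Longrightarrow> pairwise_incomparable S"
  unfolding pairwise_incomparable_def using tmax_incomp by blast

lemma part1: assumes AK: "almost_krull R" shows "t_sharp R \<longleftrightarrow> t_sharp_sharp R"
proof
  assume ts: "t_sharp R"
  show "t_sharp_sharp R" unfolding t_sharp_sharp_def
  proof (intro allI impI)
    fix P1 P2 :: "'a set set"
    assume H: "P1 \<subseteq> {P. t_prime R P} \<and> P2 \<subseteq> {P. t_prime R P} \<and> pairwise_incomparable P1 \<and>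
       pairwise_incomparable P2 \<and> P1 \<noteq> P2"
    have "P1 \<subseteq> t_Max R" "P2 \<subseteq> t_Max R" using H tprime_tmax[OF AK] by blast+
    thus "(\<Inter>P\<in>P1. loc R P) \<noteq> (\<Inter>P\<in>P2. loc R P)"
      using H by (intro ts[unfolded t_sharp_def, rule_format]) blast
  qed
next
  assume ts: "t_sharp_sharp R"
  show "t_sharp R" unfolding t_sharp_def
  proof (intro allI impI)
    fix M1 M2 :: "'a set set"
    assume H: "M1 \<subseteq> t_Max R \<and> M2 \<subseteq> t_Max R \<and> M1 \<noteq> M2"
    have "M1 \<subseteq> {P. t_prime R P}" "M2 \<subseteq> {P. t_prime R P}" using H tmax_tprime by blast+
    moreover have "pairwise_incomparable M1" "pairwise_incomparable M2" using H tmax_pairwise by blast+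
    ultimately show "(\<Inter>M\<in>M1. loc R M) \<noteq> (\<Inter>M\<in>M2. loc R M)"
      using H by (intro ts[unfolded t_sharp_sharp_def, rule_format]) blast
  qed
qed

end
context dom begin

definition ext :: "'a set \<Rightarrow> 'a \<Rightarrow> 'a set" where
  "ext A a = {p + r * a | p r. p \<in> A \<and> r \<in> R}"

lemma ext_ideal: assumes IA: "ideal_of R A" and a: "a \<in> R" shows "ideal_of R (ext A a)"
  unfolding ideal_of_def
proof (intro conjI ballI)
  show "ext A a \<subseteq> R" unfolding ext_def using ideal_sub[OF IA] a by blast
  show "0 \<in> ext A a" unfolding ext_def using ideal_0[OF IA] by (intro CollectI exI[of _ 0]) auto
next
  fix x y assume "x \<in> ext A a" "y \<in> ext A a"
  then obtain m1 r1 m2 r2 where "m1 \<in> A" "r1 \<in> R" "x = m1 + r1 * a" "m2 \<in> A" "r2 \<in> R" "y = m2 + r2 * a"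
    unfolding ext_def by blast
  moreover hence "x + y = (m1 + m2) + (r1 + r2) * a" by (simp add: algebra_simps)
  ultimately show "x + y \<in> ext A a" unfolding ext_def using ideal_add[OF IA] by blast
next
  fix s x assume s: "s \<in> R" and "x \<in> ext A a"
  then obtain m r where "m \<in> A" "r \<in> R" "x = m + r * a" unfolding ext_def by blast
  moreover hence "s * x = s * m + (s * r) * a" by (simp add: algebra_simps)
  ultimately show "s * x \<in> ext A a" unfolding ext_def using ideal_mult[OF IA s] s by blast
qed

lemma ext_sub: "A \<subseteq> ext A a"
proof
  fix p assume "p \<in> A" thus "p \<in> ext A a" unfolding ext_def by (intro CollectI exI[of _ p] exI[of _ 0]) simp
qed

lemma ext_mem: "ideal_of R A \<Longrightarrow> a \<in> ext A a"
  unfolding ext_def using ideal_0 by (intro CollectI exI[of _ 0] exI[of _ 1]) simp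

lemma ext_decomp: assumes "finite F" "F \<subseteq> ext A a"
  obtains c where "\<forall>f\<in>F. fst (c f) \<in> A \<and> snd (c f) \<in> R \<and> f = fst (c f) + snd (c f) * a"
proof -
  have "\<forall>f\<in>F. \<exists>pr. fst pr \<in> A \<and> snd pr \<in> R \<and> f = fst pr + snd pr * a"
  proof
    fix f assume "f \<in> F" hence "f \<in> ext A a" using assms by blast
    then obtain p r where "p \<in> A" "r \<in> R" "f = p + r * a" unfolding ext_def by blast
    thus "\<exists>pr. fst pr \<in> A \<and> snd pr \<in> R \<and> f = fst pr + snd pr * a" by (intro exI[of _ "(p, r)"]) simp
  qed
  from bchoice[OF this] obtain c where "\<forall>f\<in>F. fst (c f) \<in> A \<and> snd (c f) \<in> R \<and> f = fst (c f) + snd (c f) * a"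
    by blast
  thus ?thesis using that by blast
qed

lemma chain_ideal: assumes C: "C \<noteq> {}" "subset.chain \<A> C" and id: "\<And>B. B \<in> C \<Longrightarrow> ideal_of R B"
  shows "ideal_of R (\<Union>C)"
proof -
  have ch: "\<And>B1 B2. B1 \<in> C \<Longrightarrow> B2 \<in> C \<Longrightarrow> B1 \<subseteq> B2 \<or> B2 \<subseteq> B1"
    using C(2) unfolding subset.chain_def by blast
  obtain B0 where B0: "B0 \<in> C" using C(1) by blast
  show ?thesis unfolding ideal_of_def
  proof (intro conjI ballI)
    show "\<Union>C \<subseteq> R" using id ideal_sub by blast
    show "0 \<in> \<Union>C" using id ideal_0 B0 by blast
  next
    fix x y assume "x \<in> \<Union>C" "y \<in> \<Union>C"
    then obtain B1 B2 where B: "B1 \<in> C" "B2 \<in> C" "x \<in> B1" "y \<in> B2" by blast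
    show "x + y \<in> \<Union>C"
    proof (cases "B1 \<subseteq> B2")
      case True thus ?thesis using B ideal_add[OF id[OF B(2)], of x y] by blast
    next
      case False hence "B2 \<subseteq> B1" using ch B by blast
      thus ?thesis using B ideal_add[OF id[OF B(1)], of x y] by blast
    qed
  next
    fix r x assume "r \<in> R" "x \<in> \<Union>C"
    thus "r * x \<in> \<Union>C" using id ideal_mult by blast
  qed
qed

lemma fin_char: assumes AK: "almost_krull R" and TS: "t_sharp R" and x: "x \<in> R" "x \<noteq> 0"
  shows "finite {M \<in> t_Max R. x \<in> M}"
proof (rule ccontr)
  define T where "T = {M \<in> t_Max R. x \<in> M}"
  assume "\<not> finite {M \<in> t_Max R. x \<in> M}"
  hence Tinf: "infinite T" unfolding T_def .
  define \<Phi> where "\<Phi> = {A. ideal_of R A \<and> x \<in> A \<and> (\<forall>F. finite F \<and> F \<subseteq> A \<longrightarrow> infinite {M\<in>T. F \<subseteq> M})}"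
  have "\<exists>P\<in>\<Phi>. \<forall>X\<in>\<Phi>. P \<subseteq> X \<longrightarrow> X = P"
  proof (rule subset_Zorn_nonempty)
    define Rx where "Rx = {r * x | r. r \<in> R}"
    have IRx: "ideal_of R Rx" unfolding ideal_of_def
    proof (intro conjI ballI)
      show "Rx \<subseteq> R" unfolding Rx_def using x by blast
      show "0 \<in> Rx" unfolding Rx_def by (intro CollectI exI[of _ 0]) simp
    next
      fix a b assume "a \<in> Rx" "b \<in> Rx"
      then obtain r1 r2 where "r1 \<in> R" "r2 \<in> R" "a = r1 * x" "b = r2 * x" unfolding Rx_def by blast
      thus "a + b \<in> Rx" unfolding Rx_def by (intro CollectI exI[of _ "r1 + r2"]) (simp add: algebra_simps Radd)
    next
      fix s a assume "s \<in> R" "a \<in> Rx"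
      then obtain r1 where "r1 \<in> R" "a = r1 * x" unfolding Rx_def by blast
      thus "s * a \<in> Rx" unfolding Rx_def using \<open>s \<in> R\<close> by (intro CollectI exI[of _ "s * r1"]) (simp add: algebra_simps Rmult)
    qed
    have "x \<in> Rx" unfolding Rx_def by (intro CollectI exI[of _ 1]) simp
    moreover have "infinite {M\<in>T. F \<subseteq> M}" if "finite F" "F \<subseteq> Rx" for F
    proof -
      have "{M\<in>T. F \<subseteq> M} = T"
      proof (intro equalityI subsetI)
        fix M assume M: "M \<in> T"
        have "F \<subseteq> M"
        proof
          fix f assume "f \<in> F"
          hence "f \<in> Rx" using \<open>F \<subseteq> Rx\<close> by blast
          then obtain r where "r \<in> R" "f = r * x" unfolding Rx_def by blast
          moreover have "M \<in> t_Max R" "x \<in> M" using M unfolding T_def by auto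
          ultimately show "f \<in> M" using ideal_mult[OF tmax_ideal[of M]] by simp
        qed
        thus "M \<in> {M\<in>T. F \<subseteq> M}" using M by blast
      qed simp
      thus ?thesis using Tinf by simp
    qed
    ultimately have "Rx \<in> \<Phi>" unfolding \<Phi>_def using IRx by blast
    thus "\<Phi> \<noteq> {}" by blast
  next
    fix C assume C: "C \<noteq> {}" "subset.chain \<Phi> C"
    have CA: "C \<subseteq> \<Phi>" using C(2) unfolding subset.chain_def by blast
    have id: "\<And>B. B \<in> C \<Longrightarrow> ideal_of R B" using CA unfolding \<Phi>_def by blast
    have I: "ideal_of R (\<Union>C)" by (rule chain_ideal[OF C id])
    have "x \<in> \<Union>C" using C(1) CA unfolding \<Phi>_def by blast
    moreover have "infinite {M\<in>T. F \<subseteq> M}" if F: "finite F" "F \<subseteq> \<Union>C" for F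
    proof -
      obtain B where B: "B \<in> C" "F \<subseteq> B" using finite_subset_Union_chain[OF F C(1,2)] by blast
      thus ?thesis using CA F(1) unfolding \<Phi>_def by blast
    qed
    ultimately show "\<Union>C \<in> \<Phi>" unfolding \<Phi>_def using I by blast
  qed
  then obtain P where P\<Phi>: "P \<in> \<Phi>" and Pmax: "\<forall>X\<in>\<Phi>. P \<subseteq> X \<longrightarrow> X = P" by blast
  have IP: "ideal_of R P" and xP: "x \<in> P" and Pinf: "\<And>F. finite F \<Longrightarrow> F \<subseteq> P \<Longrightarrow> infinite {M\<in>T. F \<subseteq> M}"
    using P\<Phi> unfolding \<Phi>_def by blast+
  have TM: "\<And>M. M \<in> T \<Longrightarrow> M \<in> t_Max R" unfolding T_def by blast
  have P1: "1 \<notin> P"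
  proof
    assume "1 \<in> P"
    hence inf: "infinite {M\<in>T. {1} \<subseteq> M}" using Pinf[of "{1}"] by simp
    have "{M\<in>T. {1} \<subseteq> M} = {}"
    proof -
      { fix M assume "M \<in> T" "{1} \<subseteq> M"
        hence False using tmax_1[OF TM[of M]] by blast }
      thus ?thesis by blast
    qed
    thus False using inf by (metis finite.emptyI)
  qed
  have notin: "\<exists>F. finite F \<and> F \<subseteq> ext P a \<and> finite {M\<in>T. F \<subseteq> M}" if a: "a \<in> R" "a \<notin> P" for a
  proof (rule ccontr)
    assume "\<not> ?thesis"
    hence "ext P a \<in> \<Phi>" unfolding \<Phi>_def using ext_ideal[OF IP a(1)] ext_sub[of P a] xP by blast
    hence "ext P a = P" using Pmax ext_sub by blast
    thus False using ext_mem[OF IP, of a] a(2) by simp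
  qed
  have Pprime: "prime_ideal_of R P"
  proof -
    have "a \<in> P \<or> b \<in> P" if ab: "a \<in> R" "b \<in> R" "a * b \<in> P" for a b
    proof (rule ccontr)
      assume "\<not> ?thesis"
      hence na: "a \<notin> P" and nb: "b \<notin> P" by auto
      obtain F1 where F1: "finite F1" "F1 \<subseteq> ext P a" "finite {M\<in>T. F1 \<subseteq> M}" using notin[OF ab(1) na] by blast
      obtain F2 where F2: "finite F2" "F2 \<subseteq> ext P b" "finite {M\<in>T. F2 \<subseteq> M}" using notin[OF ab(2) nb] by blast
      obtain c1 where c1: "\<forall>f\<in>F1. fst (c1 f) \<in> P \<and> snd (c1 f) \<in> R \<and> f = fst (c1 f) + snd (c1 f) * a"
        using ext_decomp[OF F1(1,2)] by blast
      obtain c2 where c2: "\<forall>f\<in>F2. fst (c2 f) \<in> P \<and> snd (c2 f) \<in> R \<and> f = fst (c2 f) + snd (c2 f) * b"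
        using ext_decomp[OF F2(1,2)] by blast
      define E where "E = (fst \<circ> c1) ` F1 \<union> (fst \<circ> c2) ` F2 \<union> {a * b}"
      have Efin: "finite E" unfolding E_def using F1(1) F2(1) by blast
      have EP: "E \<subseteq> P" unfolding E_def using c1 c2 ab(3) by auto
      have "{M\<in>T. E \<subseteq> M} \<subseteq> {M\<in>T. F1 \<subseteq> M} \<union> {M\<in>T. F2 \<subseteq> M}"
      proof
        fix M assume M: "M \<in> {M\<in>T. E \<subseteq> M}"
        hence MT: "M \<in> T" and EM: "E \<subseteq> M" by auto
        have IM: "ideal_of R M" using tmax_ideal TM[OF MT] by blast
        have "a * b \<in> M" using EM unfolding E_def by blast
        hence "a \<in> M \<or> b \<in> M" using tmax_prime[OF TM[OF MT]] ab(1,2) unfolding prime_ideal_of_def by blast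
        thus "M \<in> {M\<in>T. F1 \<subseteq> M} \<union> {M\<in>T. F2 \<subseteq> M}"
        proof
          assume aM: "a \<in> M"
          have "F1 \<subseteq> M"
          proof
            fix f assume f: "f \<in> F1"
            have "fst (c1 f) \<in> M" using EM f unfolding E_def by auto
            moreover have "snd (c1 f) * a \<in> M" using ideal_mult[OF IM _ aM] c1 f by blast
            ultimately show "f \<in> M" using c1 f ideal_add[OF IM] by metis
          qed
          thus ?thesis using MT by blast
        next
          assume bM: "b \<in> M"
          have "F2 \<subseteq> M"
          proof
            fix f assume f: "f \<in> F2"
            have "fst (c2 f) \<in> M" using EM f unfolding E_def by auto
            moreover have "snd (c2 f) * b \<in> M" using ideal_mult[OF IM _ bM] c2 f by blast
            ultimately show "f \<in> M" using c2 f ideal_add[OF IM] by metis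
          qed
          thus ?thesis using MT by blast
        qed
      qed
      hence "finite {M\<in>T. E \<subseteq> M}" using F1(3) F2(3) by (meson finite_UnI finite_subset)
      thus False using Pinf[OF Efin EP] by simp
    qed
    moreover have "P \<noteq> R" using P1 by auto
    ultimately show ?thesis unfolding prime_ideal_of_def using IP by blast
  qed
  have Pne: "P \<noteq> {0}" using xP x(2) by blast
  have Pt: "t_ideal R P"
  proof -
    have "t_op R P \<subseteq> P"
    proof
      fix z assume "z \<in> t_op R P"
      then obtain F where F: "finite F" "gen_by R F \<subseteq> P" "gen_by R F \<noteq> {0}" "z \<in> v_op R F"
        unfolding t_op_iff by blast
      have FP: "F \<subseteq> P" using gen_subset[OF F(1)] F(2) by blast
      obtain a0 where a0: "a0 \<in> F" "a0 \<noteq> 0" using gen_zero[OF F(3)] by blast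
      have zR: "z \<in> R" using F(4) v_sub_R[of F] FP ideal_sub[OF IP] by blast
      have "ext P z \<in> \<Phi>" unfolding \<Phi>_def
      proof (intro CollectI conjI allI impI)
        show "ideal_of R (ext P z)" by (rule ext_ideal[OF IP zR])
        show "x \<in> ext P z" using xP ext_sub by blast
      next
        fix F' assume F': "finite F' \<and> F' \<subseteq> ext P z"
        obtain c where c: "\<forall>f\<in>F'. fst (c f) \<in> P \<and> snd (c f) \<in> R \<and> f = fst (c f) + snd (c f) * z"
          using ext_decomp[of F' P z] F' by blast
        define E where "E = F \<union> (fst \<circ> c) ` F'"
        have "finite E" unfolding E_def using F(1) F' by blast
        moreover have "E \<subseteq> P" unfolding E_def using FP c by auto
        ultimately have inf: "infinite {M\<in>T. E \<subseteq> M}" by (rule Pinf)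
        have "{M\<in>T. E \<subseteq> M} \<subseteq> {M\<in>T. F' \<subseteq> M}"
        proof
          fix M assume M: "M \<in> {M\<in>T. E \<subseteq> M}"
          hence MT: "M \<in> T" and EM: "E \<subseteq> M" by auto
          have IM: "ideal_of R M" using tmax_ideal TM[OF MT] by blast
          have "F \<subseteq> M" using EM unfolding E_def by blast
          hence "v_op R F \<subseteq> M" using t_ideal_vF[OF tmax_t[OF TM[OF MT]] F(1) _ a0] by blast
          hence zM: "z \<in> M" using F(4) by blast
          have "F' \<subseteq> M"
          proof
            fix f assume f: "f \<in> F'"
            have "fst (c f) \<in> M" using EM f unfolding E_def by auto
            moreover have "snd (c f) * z \<in> M" using ideal_mult[OF IM _ zM] c f by blast
            ultimately show "f \<in> M" using c f ideal_add[OF IM] by metis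
          qed
          thus "M \<in> {M\<in>T. F' \<subseteq> M}" using MT by blast
        qed
        thus "infinite {M\<in>T. F' \<subseteq> M}" using inf infinite_super by blast
      qed
      hence "ext P z = P" using Pmax ext_sub by blast
      thus "z \<in> P" using ext_mem[OF IP, of z] by simp
    qed
    thus ?thesis unfolding t_ideal_def using IP Pne t_ext[OF IP Pne] by blast
  qed
  have PM: "P \<in> t_Max R" using tprime_tmax[OF AK] Pt Pprime unfolding t_prime_def by blast
  have Pinf2: "infinite {M\<in>T. F \<subseteq> M}" if "finite F" "F \<subseteq> P" for F using Pinf that by blast
  have ne: "t_Max R - {P} \<noteq> t_Max R" using PM by blast
  have "(\<Inter>M\<in>t_Max R - {P}. loc R M) \<noteq> (\<Inter>M\<in>t_Max R. loc R M)"
    using ne by (intro TS[unfolded t_sharp_def, rule_format]) blast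
  moreover have "(\<Inter>M\<in>t_Max R. loc R M) \<subseteq> (\<Inter>M\<in>t_Max R - {P}. loc R M)" by blast
  ultimately obtain y where y1: "y \<in> (\<Inter>M\<in>t_Max R - {P}. loc R M)" and y2: "y \<notin> (\<Inter>M\<in>t_Max R. loc R M)"
    by blast
  have yN: "y \<in> loc R N" if "N \<in> t_Max R" "N \<noteq> P" for N using y1 that by blast
  have yP: "y \<notin> loc R P"
  proof
    assume "y \<in> loc R P"
    hence "y \<in> (\<Inter>M\<in>t_Max R. loc R M)" using yN by blast
    thus False using y2 by blast
  qed
  have P0: "0 \<in> P" using ideal_0[OF IP] .
  have PR: "P \<subseteq> R" using ideal_sub[OF IP] .
  have "0 \<in> loc R P" using loc_R[OF R0 P1] .
  hence y0: "y \<noteq> 0" using yP by blast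
  define I where "I = {r. r \<in> R \<and> r * y \<in> R}"
  have I0: "0 \<in> I" unfolding I_def by simp
  have IsubP: "I \<subseteq> P"
  proof
    fix r assume r: "r \<in> I"
    show "r \<in> P"
    proof (rule ccontr)
      assume rP: "r \<notin> P"
      have "r \<noteq> 0" using rP P0 by blast
      hence "y = (r * y) / r" by simp
      moreover have "(r * y) / r \<in> loc R P" using r rP unfolding I_def by (intro locI) auto
      ultimately show False using yP by simp
    qed
  qed
  define B where "B = {f + y * g | f g. f \<in> I \<and> g \<in> I}"
  have IB: "ideal_of R B" unfolding ideal_of_def
  proof (intro conjI ballI)
    show "B \<subseteq> R"
    proof
      fix b assume "b \<in> B"
      then obtain f g where "f \<in> I" "g \<in> I" "b = f + y * g" unfolding B_def by blast
      thus "b \<in> R" unfolding I_def by (auto simp: mult.commute)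
    qed
    show "0 \<in> B" unfolding B_def using I0 by (intro CollectI exI[of _ 0]) simp
  next
    fix a b assume "a \<in> B" "b \<in> B"
    then obtain f g f' g' where fg: "f \<in> I" "g \<in> I" "a = f + y * g" "f' \<in> I" "g' \<in> I" "b = f' + y * g'"
      unfolding B_def by blast
    have "a + b = (f + f') + y * (g + g')" using fg by (simp add: algebra_simps)
    moreover have "f + f' \<in> I" "g + g' \<in> I" using fg unfolding I_def by (auto simp: algebra_simps)
    ultimately show "a + b \<in> B" unfolding B_def by blast
  next
    fix r a assume r: "r \<in> R" and "a \<in> B"
    then obtain f g where fg: "f \<in> I" "g \<in> I" "a = f + y * g" unfolding B_def by blast
    have "r * a = r * f + y * (r * g)" using fg by (simp add: algebra_simps)
    moreover have "r * f \<in> I" "r * g \<in> I" using fg r unfolding I_def by (auto simp: mult.assoc)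
    ultimately show "r * a \<in> B" unfolding B_def by blast
  qed
  obtain a0 b0 where ab0: "a0 \<in> R" "b0 \<in> R" "b0 \<noteq> 0" "y = a0 / b0" using frac .
  have "b0 * y = a0" using ab0 by simp
  hence "b0 \<in> I" unfolding I_def using ab0 by simp
  hence "b0 + y * 0 \<in> B" unfolding B_def using I0 by blast
  hence Bne: "B \<noteq> {0}" using ab0(3) by auto
  have notN: "\<not> B \<subseteq> N" if N: "N \<in> t_Max R" for N
  proof (cases "N = P")
    case False
    obtain c s where cs: "c \<in> R" "s \<in> R" "s \<notin> N" "y = c / s" using locE yN[OF N False] by blast
    have "s \<noteq> 0" using cs(3) tmax_0[OF N] by blast
    hence "s * y = c" using cs(4) by simp
    hence "s \<in> I" unfolding I_def using cs by simp
    hence "s + y * 0 \<in> B" unfolding B_def using I0 by blast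
    thus ?thesis using cs(3) by auto
  next
    case True
    have "dvr (loc R P)" using AK PM unfolding almost_krull_def by blast
    hence "inverse y \<in> loc R P" using dvr_inv yP by blast
    then obtain c s where cs: "c \<in> R" "s \<in> R" "s \<notin> P" "inverse y = c / s" by (rule locE)
    have "s \<noteq> 0" using cs(3) P0 by blast
    hence "c * y = s" using cs(4) y0 by (simp add: field_simps)
    hence "c \<in> I" unfolding I_def using cs by simp
    hence "0 + y * c \<in> B" unfolding B_def using I0 by blast
    hence "s \<in> B" using \<open>c * y = s\<close> by (simp add: mult.commute)
    thus ?thesis using cs(3) True by blast
  qed
  have "1 \<in> t_op R B"
  proof (rule ccontr)
    assume n1: "1 \<notin> t_op R B"
    have "t_ideal R (t_op R B)" by (rule t_ideal_t_op[OF IB Bne])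
    moreover have "t_op R B \<noteq> R" using n1 by auto
    ultimately obtain N where N: "N \<in> t_Max R" "t_op R B \<subseteq> N" using zorn_tmax by blast
    have "B \<subseteq> N" using t_ext[OF IB Bne] N(2) by blast
    thus False using notN[OF N(1)] by blast
  qed
  then obtain F0 where F0: "finite F0" "gen_by R F0 \<subseteq> B" "1 \<in> v_op R F0" unfolding t_op_iff by blast
  have F0B: "F0 \<subseteq> B" using gen_subset[OF F0(1)] F0(2) by blast
  have "\<forall>g\<in>F0. \<exists>pr. fst pr \<in> I \<and> snd pr \<in> I \<and> g = fst pr + y * snd pr"
  proof
    fix g assume "g \<in> F0" hence "g \<in> B" using F0B by blast
    then obtain f h where "f \<in> I" "h \<in> I" "g = f + y * h" unfolding B_def by blast
    thus "\<exists>pr. fst pr \<in> I \<and> snd pr \<in> I \<and> g = fst pr + y * snd pr" by (intro exI[of _ "(f, h)"]) simp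
  qed
  from bchoice[OF this] obtain c where c: "\<forall>g\<in>F0. fst (c g) \<in> I \<and> snd (c g) \<in> I \<and> g = fst (c g) + y * snd (c g)"
    by blast
  define E where "E = (fst \<circ> c) ` F0 \<union> (snd \<circ> c) ` F0"
  have Efin: "finite E" unfolding E_def using F0(1) by blast
  have EI: "E \<subseteq> I" unfolding E_def using c by auto
  have "infinite {M\<in>T. E \<subseteq> M}" using Pinf2[OF Efin] EI IsubP by blast
  hence "infinite ({M\<in>T. E \<subseteq> M} - {P})" by simp
  hence "({M\<in>T. E \<subseteq> M} - {P}) \<noteq> {}" by (metis finite.emptyI)
  then obtain M where "M \<in> {M\<in>T. E \<subseteq> M} - {P}" by blast
  hence M: "M \<in> T" "E \<subseteq> M" "M \<noteq> P" by auto
  have MM: "M \<in> t_Max R" using TM[OF M(1)] .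
  have IM: "ideal_of R M" by (rule tmax_ideal[OF MM])
  obtain c' s where cs: "c' \<in> R" "s \<in> R" "s \<notin> M" "y = c' / s" using locE yN[OF MM M(3)] by blast
  have s0: "s \<noteq> 0" using cs(3) tmax_0[OF MM] by blast
  hence sy: "s * y = c'" using cs(4) by simp
  define S where "S = (\<lambda>g. s * g) ` F0"
  have Sfin: "finite S" unfolding S_def using F0(1) by blast
  have SM: "S \<subseteq> M"
  proof
    fix t assume "t \<in> S"
    then obtain g where g: "g \<in> F0" "t = s * g" unfolding S_def by blast
    have fI: "fst (c g) \<in> M" "snd (c g) \<in> M" using M(2) g(1) unfolding E_def by auto
    have hg: "g = fst (c g) + y * snd (c g)" using g(1) c by blast
    have "t = s * g" by (rule g(2))
    also have "\<dots> = s * (fst (c g) + y * snd (c g))" using hg by (rule arg_cong)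
    also have "\<dots> = s * fst (c g) + (s * y) * snd (c g)" by (simp add: algebra_simps)
    finally have "t = s * fst (c g) + (s * y) * snd (c g)" .
    moreover have "s * fst (c g) \<in> M" using ideal_mult[OF IM cs(2) fI(1)] .
    moreover have "(s * y) * snd (c g) \<in> M" using ideal_mult[OF IM _ fI(2)] sy cs(1) by simp
    ultimately show "t \<in> M" using ideal_add[OF IM] by simp
  qed
  obtain g0 where g0: "g0 \<in> F0" "g0 \<noteq> 0" using one_v_nonzero[OF F0(3)] by blast
  have "s * g0 \<in> S" "s * g0 \<noteq> 0" unfolding S_def using g0 s0 by auto
  hence vS: "v_op R S \<subseteq> M" using t_ideal_vF[OF tmax_t[OF MM] Sfin SM] by blast
  have "s \<in> v_op R S"
  proof -
    have "s * w \<in> R" if w: "w \<in> colon R S" for w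
    proof -
      have "\<forall>g\<in>F0. (w * s) * g \<in> R"
      proof
        fix g assume "g \<in> F0"
        hence "s * g \<in> S" unfolding S_def by blast
        thus "(w * s) * g \<in> R" using w unfolding colon_def by (simp add: mult.assoc)
      qed
      hence "w * s \<in> colon R F0" unfolding colon_def by blast
      hence "1 * (w * s) \<in> R" using F0(3) unfolding v_op_def colon_def by blast
      thus ?thesis by (simp add: mult.commute)
    qed
    thus ?thesis unfolding v_op_def colon_def by blast
  qed
  thus False using vS cs(3) by blast
qed

lemma hard: assumes AK: "almost_krull R" and TS: "t_sharp R" shows "krull R"
  unfolding krull_def
proof (intro exI[of _ "loc R ` t_Max R"] conjI ballI impI)
  show "\<And>V. V \<in> loc R ` t_Max R \<Longrightarrow> dvr V" using AK unfolding almost_krull_def by blast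
  show "R = \<Inter> (loc R ` t_Max R)" using inter_loc by simp
next
  fix x assume x: "x \<in> R" "x \<noteq> 0"
  have "{V \<in> loc R ` t_Max R. inverse x \<notin> V} \<subseteq> loc R ` {M \<in> t_Max R. x \<in> M}"
  proof
    fix V assume "V \<in> {V \<in> loc R ` t_Max R. inverse x \<notin> V}"
    then obtain M where M: "M \<in> t_Max R" "V = loc R M" "inverse x \<notin> V" by blast
    have "x \<in> M" using loc_inv[of x M] M x(1) by blast
    thus "V \<in> loc R ` {M \<in> t_Max R. x \<in> M}" using M by blast
  qed
  moreover have "finite (loc R ` {M \<in> t_Max R. x \<in> M})" using fin_char[OF AK TS x] by blast
  ultimately show "finite {V \<in> loc R ` t_Max R. inverse x \<notin> V}" by (rule finite_subset)
qed

end

locale krull_dom = dom +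
  fixes Vs :: "'a set set" and val :: "'a set \<Rightarrow> 'a \<Rightarrow> int"
  assumes dvrV: "V \<in> Vs \<Longrightarrow> dvr V"
  and vm0: "V \<in> Vs \<Longrightarrow> x \<noteq> 0 \<Longrightarrow> y \<noteq> 0 \<Longrightarrow> val V (x * y) = val V x + val V y"
  and Vdef: "V \<in> Vs \<Longrightarrow> V = {x. x = 0 \<or> 0 \<le> val V x}"
  and RV: "R = \<Inter>Vs"
  and fc: "x \<in> R \<Longrightarrow> x \<noteq> 0 \<Longrightarrow> finite {V\<in>Vs. inverse x \<notin> V}"
begin

lemma vm: "V \<in> Vs \<Longrightarrow> \<forall>x y. x \<noteq> 0 \<and> y \<noteq> 0 \<longrightarrow> val V (x * y) = val V x + val V y"
  using vm0 by blast

lemma memV: "V \<in> Vs \<Longrightarrow> z \<in> V \<longleftrightarrow> z = 0 \<or> 0 \<le> val V z"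
  using Vdef by blast

lemma RsubV: "V \<in> Vs \<Longrightarrow> R \<subseteq> V" using RV by blast

lemma inR: "(\<And>V. V \<in> Vs \<Longrightarrow> z \<in> V) \<Longrightarrow> z \<in> R" using RV by blast

lemma valR: "V \<in> Vs \<Longrightarrow> r \<in> R \<Longrightarrow> r \<noteq> 0 \<Longrightarrow> 0 \<le> val V r"
  using RsubV memV by blast

lemma V_mult: assumes V: "V \<in> Vs" and "a \<in> V" "b \<in> V" shows "a * b \<in> V"
proof (cases "a = 0 \<or> b = 0")
  case True thus ?thesis using memV[OF V] by auto
next
  case False
  hence "val V (a * b) = val V a + val V b" using vm0[OF V] by blast
  moreover have "0 \<le> val V a" "0 \<le> val V b" using assms False memV[OF V] by auto
  ultimately show ?thesis using memV[OF V] by simp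
qed

lemma V_0: "V \<in> Vs \<Longrightarrow> 0 \<in> V" using memV by blast

lemma inv_notin_pos: assumes V: "V \<in> Vs" and "inverse x \<notin> V" shows "x \<noteq> 0" "0 < val V x"
proof -
  show x0: "x \<noteq> 0" using assms V_0 by auto
  have "\<not> 0 \<le> val V (inverse x)" using assms memV[OF V] by auto
  thus "0 < val V x" using val_inv[OF vm[OF V] x0] by simp
qed

lemma inv_in_val: assumes V: "V \<in> Vs" and "x \<in> R" "x \<noteq> 0" "inverse x \<in> V" shows "val V x = 0"
proof -
  have "0 \<le> val V x" using valR assms by blast
  moreover have "0 \<le> val V (inverse x)" using assms memV[OF V] by simp
  ultimately show ?thesis using val_inv[OF vm[OF V] assms(3)] by simp
qed

definition mu :: "'a set \<Rightarrow> 'a set \<Rightarrow> nat" where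
  "mu S V = (LEAST n. \<exists>s\<in>S. s \<noteq> 0 \<and> val V s = int n)"

lemma mu_ex: assumes V: "V \<in> Vs" "S \<subseteq> R" "x \<in> S" "x \<noteq> 0"
  shows "\<exists>s\<in>S. s \<noteq> 0 \<and> val V s = int (mu S V)"
    and "\<And>s. s \<in> S \<Longrightarrow> s \<noteq> 0 \<Longrightarrow> int (mu S V) \<le> val V s"
proof -
  have ex: "\<exists>n. \<exists>s\<in>S. s \<noteq> 0 \<and> val V s = int n"
    using assms valR[OF V(1), of x] by (intro exI[of _ "nat (val V x)"] bexI[of _ x]) auto
  show "\<exists>s\<in>S. s \<noteq> 0 \<and> val V s = int (mu S V)" unfolding mu_def by (rule LeastI_ex[OF ex])
  fix s assume s: "s \<in> S" "s \<noteq> 0"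
  have "0 \<le> val V s" using valR[OF V(1)] s assms(2) by blast
  hence "\<exists>s'\<in>S. s' \<noteq> 0 \<and> val V s' = int (nat (val V s))" using s by auto
  hence "mu S V \<le> nat (val V s)" unfolding mu_def by (rule Least_le)
  thus "int (mu S V) \<le> val V s" using \<open>0 \<le> val V s\<close> by linarith
qed

lemma colon_char: assumes S: "S \<subseteq> R" "x \<in> S" "x \<noteq> 0"
  shows "colon R S = {z. (\<forall>V\<in>Vs - {V\<in>Vs. inverse x \<notin> V}. z \<in> V) \<and>
     (\<forall>V\<in>{V\<in>Vs. inverse x \<notin> V}. z = 0 \<or> 0 \<le> val V z + int (mu S V))}"
    (is "_ = ?C")
proof (intro equalityI subsetI)
  fix z assume z: "z \<in> colon R S"
  have zs: "\<And>s V. s \<in> S \<Longrightarrow> V \<in> Vs \<Longrightarrow> z * s \<in> V" using z RV unfolding colon_def by blast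
  show "z \<in> ?C"
  proof (intro CollectI conjI ballI)
    fix V assume V: "V \<in> Vs - {V\<in>Vs. inverse x \<notin> V}"
    hence "inverse x \<in> V" "V \<in> Vs" by auto
    hence "(z * x) * inverse x \<in> V" using zs[OF S(2)] V_mult by blast
    moreover have "(z * x) * inverse x = z" using S(3) by simp
    ultimately show "z \<in> V" by simp
  next
    fix V assume V: "V \<in> {V\<in>Vs. inverse x \<notin> V}"
    hence VV: "V \<in> Vs" by simp
    show "z = 0 \<or> 0 \<le> val V z + int (mu S V)"
    proof (cases "z = 0")
      case False
      obtain s where s: "s \<in> S" "s \<noteq> 0" "val V s = int (mu S V)" using mu_ex[OF VV S] by blast
      have "z * s \<in> V" using zs[OF s(1) VV] .
      moreover have "z * s \<noteq> 0" using False s(2) by simp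
      ultimately have "0 \<le> val V (z * s)" using memV[OF VV] by blast
      thus ?thesis using vm0[OF VV False s(2)] s(3) by simp
    qed simp
  qed
next
  fix z assume z: "z \<in> ?C"
  show "z \<in> colon R S" unfolding colon_def
  proof (intro CollectI ballI inR)
    fix s V assume s: "s \<in> S" and V: "V \<in> Vs"
    show "z * s \<in> V"
    proof (cases "z = 0 \<or> s = 0")
      case True thus ?thesis using V_0[OF V] by auto
    next
      case False
      show ?thesis
      proof (cases "inverse x \<in> V")
        case True
        hence "z \<in> V" using z V by blast
        moreover have "s \<in> V" using s S(1) RsubV[OF V] by blast
        ultimately show ?thesis using V_mult[OF V] by blast
      next
        case xV: False
        have "0 \<le> val V z + int (mu S V)" using z V xV False by blast
        moreover have "int (mu S V) \<le> val V s" using mu_ex(2)[OF V S s] False by blast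
        ultimately have "0 \<le> val V (z * s)" using vm0[OF V] False by simp
        thus ?thesis using memV[OF V] by blast
      qed
    qed
  qed
qed

lemma finite_colons: assumes x: "x \<in> R" "x \<noteq> 0"
  shows "finite {colon R S | S. S \<subseteq> R \<and> x \<in> S}"
proof -
  define Fx where "Fx = {V\<in>Vs. inverse x \<notin> V}"
  have Fxfin: "finite Fx" unfolding Fx_def using fc[OF x] .
  define B where "B = (\<Union>V\<in>Fx. {0..nat (val V x)})"
  have Bfin: "finite B" unfolding B_def using Fxfin by blast
  define g where "g = (\<lambda>f. {z. (\<forall>V\<in>Vs - Fx. z \<in> V) \<and> (\<forall>V\<in>Fx. z = 0 \<or> 0 \<le> val V z + int (f V))})"
  define FS where "FS = {f. \<forall>V. (V \<in> Fx \<longrightarrow> f V \<in> B) \<and> (V \<notin> Fx \<longrightarrow> f V = (0::nat))}"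
  have "{colon R S | S. S \<subseteq> R \<and> x \<in> S} \<subseteq> g ` FS"
  proof
    fix C assume "C \<in> {colon R S | S. S \<subseteq> R \<and> x \<in> S}"
    then obtain S where S: "S \<subseteq> R" "x \<in> S" "C = colon R S" by blast
    define f where "f = (\<lambda>V. if V \<in> Fx then mu S V else 0)"
    have "C = g f" unfolding S(3) colon_char[OF S(1,2) x(2)] g_def Fx_def f_def
      by (intro Collect_cong conj_cong refl ball_cong) auto
    moreover have "f \<in> FS" unfolding FS_def
    proof (intro CollectI allI conjI impI)
      fix V assume V: "V \<in> Fx"
      hence "V \<in> Vs" unfolding Fx_def by blast
      hence "int (mu S V) \<le> val V x" using mu_ex(2)[OF _ S(1,2) x(2) S(2) x(2)] by blast
      hence "mu S V \<in> {0..nat (val V x)}" by simp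
      thus "f V \<in> B" unfolding B_def f_def using V by auto
    next
      fix V assume "V \<notin> Fx" thus "f V = 0" unfolding f_def by simp
    qed
    ultimately show "C \<in> g ` FS" by blast
  qed
  moreover have "finite FS" unfolding FS_def by (rule finite_set_of_finite_funs[OF Fxfin Bfin])
  ultimately show ?thesis using finite_subset by blast
qed

lemma tmax_div: assumes M: "M \<in> t_Max R" shows "v_op R M = M"
proof -
  have MR: "M \<subseteq> R" by (rule tmax_sub[OF M])
  have Mt: "t_ideal R M" by (rule tmax_t[OF M])
  obtain x where x: "x \<in> M" "x \<noteq> 0" using nonzero_elem[of M] Mt unfolding t_ideal_def by blast
  have xR: "x \<in> R" using x MR by blast
  define \<D> where "\<D> = {v_op R F | F. finite F \<and> x \<in> F \<and> F \<subseteq> M}"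
  have "\<D> \<subseteq> colon R ` {colon R S | S. S \<subseteq> R \<and> x \<in> S}"
  proof
    fix D assume "D \<in> \<D>"
    then obtain F where F: "finite F" "x \<in> F" "F \<subseteq> M" "D = v_op R F" unfolding \<D>_def by blast
    have "colon R F \<in> {colon R S | S. S \<subseteq> R \<and> x \<in> S}" using F MR by blast
    moreover have "D = colon R (colon R F)" using F(4) unfolding v_op_def .
    ultimately show "D \<in> colon R ` {colon R S | S. S \<subseteq> R \<and> x \<in> S}" by blast
  qed
  hence Dfin: "finite \<D>" using finite_colons[OF xR x(2)] by (meson finite_imageI finite_subset)
  have "\<forall>D\<in>\<D>. \<exists>F. finite F \<and> x \<in> F \<and> F \<subseteq> M \<and> D = v_op R F" unfolding \<D>_def by blast
  from bchoice[OF this] obtain Fc where Fc: "\<forall>D\<in>\<D>. finite (Fc D) \<and> x \<in> Fc D \<and> Fc D \<subseteq> M \<and> D = v_op R (Fc D)"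
    by blast
  define Fs where "Fs = insert x (\<Union>D\<in>\<D>. Fc D)"
  have Fsfin: "finite Fs" unfolding Fs_def using Dfin Fc by blast
  have FsM: "Fs \<subseteq> M" unfolding Fs_def using Fc x by blast
  have xFs: "x \<in> Fs" unfolding Fs_def by blast
  have vFs: "v_op R Fs \<subseteq> M" by (rule t_ideal_vF[OF Mt Fsfin FsM xFs x(2)])
  have "M \<subseteq> v_op R Fs"
  proof
    fix m assume "m \<in> M"
    hence "m \<in> t_op R M" using Mt unfolding t_ideal_def by simp
    then obtain F where F: "finite F" "gen_by R F \<subseteq> M" "m \<in> v_op R F" unfolding t_op_iff by blast
    have FM: "F \<subseteq> M" using gen_subset[OF F(1)] F(2) by blast
    define D where "D = v_op R (insert x F)"
    have DD: "D \<in> \<D>" unfolding \<D>_def D_def using F(1) FM x(1) by blast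
    have "m \<in> D" unfolding D_def using F(3) v_mono[of F "insert x F"] by blast
    moreover have "Fc D \<subseteq> Fs" unfolding Fs_def using DD by blast
    hence "v_op R (Fc D) \<subseteq> v_op R Fs" by (rule v_mono)
    moreover have "D = v_op R (Fc D)" using Fc DD by blast
    ultimately show "m \<in> v_op R Fs" by blast
  qed
  hence "M = v_op R Fs" using vFs by blast
  thus ?thesis using v_idem by metis
qed

lemma tmax_colon: assumes M: "M \<in> t_Max R" shows "\<exists>z. z \<in> colon R M \<and> z \<notin> R"
proof (rule ccontr)
  assume "\<not> ?thesis"
  hence "colon R M \<subseteq> R" by blast
  moreover have "R \<subseteq> colon R M" using tmax_sub[OF M] unfolding colon_def by blast
  ultimately have "colon R M = R" by blast
  hence "v_op R M = R" unfolding v_op_def using colon_R by simp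
  thus False using tmax_div[OF M] tmax_ne[OF M] by simp
qed

lemma tmax_pi: assumes M: "M \<in> t_Max R" and z: "z \<in> colon R M" "z \<notin> R"
  shows "\<exists>p\<in>M. z * p \<notin> M"
proof (rule ccontr)
  assume "\<not> ?thesis"
  hence zM: "\<And>m. m \<in> M \<Longrightarrow> z * m \<in> M" by blast
  have MR: "M \<subseteq> R" by (rule tmax_sub[OF M])
  obtain x where x: "x \<in> M" "x \<noteq> 0" using nonzero_elem[of M] tmax_t[OF M] unfolding t_ideal_def by blast
  have pw: "z ^ n * x \<in> M" for n
  proof (induction n)
    case 0 thus ?case using x by simp
  next
    case (Suc n)
    have "z * (z ^ n * x) \<in> M" using zM[OF Suc] .
    thus ?case by (simp add: mult.assoc)
  qed
  have "z \<in> R"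
  proof (rule inR)
    fix V assume V: "V \<in> Vs"
    show "z \<in> V"
    proof (rule ccontr)
      assume zV: "z \<notin> V"
      hence z0: "z \<noteq> 0" using V_0[OF V] by auto
      have vz: "val V z < 0" using zV memV[OF V] by auto
      have vx: "0 \<le> val V x" using valR[OF V] x MR by blast
      define n where "n = Suc (nat (val V x))"
      define w where "w = z ^ n * x"
      have w0: "w \<noteq> 0" unfolding w_def using z0 x(2) by simp
      have "w \<in> V" unfolding w_def using pw MR RsubV[OF V] by blast
      hence "0 \<le> val V w" using memV[OF V] w0 by blast
      moreover have "val V w = int n * val V z + val V x"
        unfolding w_def using vm0[OF V] val_pow[OF vm[OF V] z0] z0 x(2) by simp
      moreover have "int n * val V z \<le> - int n"
      proof -
        have "val V z \<le> -1" using vz by simp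
        hence "int n * val V z \<le> int n * (-1)" by (rule mult_left_mono) simp
        thus ?thesis by simp
      qed
      moreover have "int n = val V x + 1" unfolding n_def using vx by simp
      ultimately show False by linarith
    qed
  qed
  thus False using z(2) by blast
qed

end
context krull_dom begin

lemma inv_not_loc: assumes M: "M \<in> t_Max R" and p: "p \<in> M" "p \<noteq> 0" shows "inverse p \<notin> loc R M"
proof
  assume "inverse p \<in> loc R M"
  then obtain c t where ct: "c \<in> R" "t \<in> R" "t \<notin> M" "inverse p = c / t" by (rule locE)
  have t0: "t \<noteq> 0" using ct(3) tmax_0[OF M] by blast
  have "t = p * c" using ct(4) t0 p(2) by (simp add: field_simps)
  moreover have "p * c \<in> M" using ideal_mult2[OF tmax_ideal[OF M] ct(1) p(1)] .
  ultimately show False using ct(3) by simp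
qed

lemma tmax_V: assumes M: "M \<in> t_Max R" and p: "p \<in> M" "p \<noteq> 0"
  shows "\<exists>V\<in>Vs. (\<forall>s\<in>R. s \<notin> M \<longrightarrow> inverse s \<in> V) \<and> inverse p \<notin> V"
proof (rule ccontr)
  assume "\<not> ?thesis"
  hence H: "\<And>V. V \<in> Vs \<Longrightarrow> inverse p \<notin> V \<Longrightarrow> \<exists>s\<in>R. s \<notin> M \<and> inverse s \<notin> V" by blast
  have MR: "M \<subseteq> R" by (rule tmax_sub[OF M])
  have pR: "p \<in> R" using p MR by blast
  have Mp: "prime_ideal_of R M" by (rule tmax_prime[OF M])
  define Fp where "Fp = {V\<in>Vs. inverse p \<notin> V}"
  have Fpfin: "finite Fp" unfolding Fp_def using fc[OF pR p(2)] .
  have claim: "W \<subseteq> Fp \<Longrightarrow> \<exists>s\<in>R. s \<notin> M \<and> (\<forall>V\<in>W. val V p \<le> val V s)" if "finite W" for W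
    using that
  proof (induction W rule: finite_induct)
    case empty thus ?case using tmax_1[OF M] by (intro bexI[of _ 1]) auto
  next
    case (insert V W)
    then obtain s where s: "s \<in> R" "s \<notin> M" "\<forall>V\<in>W. val V p \<le> val V s" by blast
    have VF: "V \<in> Fp" using insert(4) by blast
    hence VV: "V \<in> Vs" and pV: "inverse p \<notin> V" unfolding Fp_def by auto
    obtain sV where sV: "sV \<in> R" "sV \<notin> M" "inverse sV \<notin> V" using H[OF VV pV] by blast
    define k where "k = nat (val V p)"
    define s' where "s' = s * sV ^ k"
    have s'R: "s' \<in> R" unfolding s'_def using s sV by blast
    have "sV ^ k \<notin> M" using prime_pow[OF Mp sV(1)] sV(2) by blast
    hence s'M: "s' \<notin> M" unfolding s'_def using Mp s(1,2) sV(1) Rpow unfolding prime_ideal_of_def by blast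
    have s0: "s \<noteq> 0" using s(2) tmax_0[OF M] by blast
    have sV0: "sV \<noteq> 0" using sV(2) tmax_0[OF M] by blast
    have vs': "val W' s' = val W' s + int k * val W' sV" if "W' \<in> Vs" for W'
      unfolding s'_def using vm0[OF that] val_pow[OF vm[OF that] sV0] s0 sV0 by simp
    have "\<forall>W'\<in>insert V W. val W' p \<le> val W' s'"
    proof
      fix W' assume W': "W' \<in> insert V W"
      hence W'V: "W' \<in> Vs" using insert(4) unfolding Fp_def by blast
      show "val W' p \<le> val W' s'"
      proof (cases "W' = V")
        case True
        have "0 \<le> val V s" using valR[OF VV s(1) s0] .
        moreover have "1 \<le> val V sV" using inv_notin_pos[OF VV sV(3)] by simp
        hence "int k * 1 \<le> int k * val V sV" by (intro mult_left_mono) auto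
        moreover have "val V p \<le> int k" unfolding k_def by simp
        ultimately show ?thesis using vs'[OF VV] True by simp
      next
        case False
        hence "W' \<in> W" using W' by blast
        hence "val W' p \<le> val W' s" using s(3) by blast
        moreover have "0 \<le> val W' sV" using valR[OF W'V sV(1) sV0] .
        hence "0 \<le> int k * val W' sV" by simp
        ultimately show ?thesis using vs'[OF W'V] by simp
      qed
    qed
    thus ?case using s'R s'M by blast
  qed
  obtain s where s: "s \<in> R" "s \<notin> M" "\<forall>V\<in>Fp. val V p \<le> val V s" using claim[OF Fpfin] by blast
  have s0: "s \<noteq> 0" using s(2) tmax_0[OF M] by blast
  define q where "q = s / p"
  have "q \<in> R"
  proof (rule inR)
    fix V assume V: "V \<in> Vs"
    show "q \<in> V"
    proof (cases "inverse p \<in> V")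
      case True
      have "s \<in> V" using s(1) RsubV[OF V] by blast
      hence "s * inverse p \<in> V" using V_mult[OF V _ True] by blast
      thus ?thesis unfolding q_def by (simp add: divide_inverse)
    next
      case False
      hence "V \<in> Fp" unfolding Fp_def using V by blast
      hence "val V p \<le> val V s" using s(3) by blast
      hence "0 \<le> val V q" unfolding q_def using val_div[OF vm[OF V] s0 p(2)] by simp
      thus ?thesis using memV[OF V] by blast
    qed
  qed
  hence "q / s \<in> loc R M" using s by (intro locI) auto
  moreover have "q / s = inverse p" unfolding q_def using s0 p(2) by (simp add: field_simps)
  ultimately show False using inv_not_loc[OF M p] by simp
qed

lemma loc_eq_V: assumes M: "M \<in> t_Max R" and z: "z \<in> colon R M" and p: "p \<in> M" "z * p \<notin> M"
  and V: "V \<in> Vs" "\<forall>s\<in>R. s \<notin> M \<longrightarrow> inverse s \<in> V" "inverse p \<notin> V"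
  shows "loc R M = V"
proof -
  have MR: "M \<subseteq> R" by (rule tmax_sub[OF M])
  have Mp: "prime_ideal_of R M" by (rule tmax_prime[OF M])
  have M1: "1 \<notin> M" by (rule tmax_1[OF M])
  have pR: "p \<in> R" using p MR by blast
  have zp0: "z * p \<noteq> 0" using p(2) tmax_0[OF M] by auto
  hence z0: "z \<noteq> 0" and p0: "p \<noteq> 0" by auto
  have zpR: "z * p \<in> R" using z p(1) unfolding colon_def by blast
  have vp: "1 \<le> val V p" using inv_notin_pos[OF V(1) V(3)] by simp
  have locV: "loc R M \<subseteq> V"
  proof
    fix w assume "w \<in> loc R M"
    then obtain a s where as: "a \<in> R" "s \<in> R" "s \<notin> M" "w = a / s" by (rule locE)
    have "a * inverse s \<in> V" using V_mult[OF V(1)] as RsubV[OF V(1)] V(2) by blast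
    thus "w \<in> V" using as(4) by (simp add: divide_inverse)
  qed
  have unitval: "val V u = 0" if "u \<in> loc R M" "inverse u \<in> loc R M" "u \<noteq> 0" for u
  proof -
    have "0 \<le> val V u" "0 \<le> val V (inverse u)" using that locV memV[OF V(1)] by auto
    thus ?thesis using val_inv[OF vm[OF V(1)] that(3)] by simp
  qed
  have decomp: "\<forall>r. r \<in> loc R M \<longrightarrow> r \<noteq> 0 \<longrightarrow> nat (val V r) = n \<longrightarrow>
      (\<exists>k u. r = p ^ k * u \<and> u \<in> loc R M \<and> inverse u \<in> loc R M)" for n
  proof (induction n rule: less_induct)
    case (less n)
    show ?case
    proof (intro allI impI)
      fix r assume r: "r \<in> loc R M" "r \<noteq> 0" "nat (val V r) = n"
      show "\<exists>k u. r = p ^ k * u \<and> u \<in> loc R M \<and> inverse u \<in> loc R M"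
      proof (cases "inverse r \<in> loc R M")
        case True thus ?thesis using r by (intro exI[of _ 0] exI[of _ r]) simp
      next
        case False
        obtain a s where as: "a \<in> R" "s \<in> R" "s \<notin> M" "r = a / s" using locE[OF r(1)] by blast
        have s0: "s \<noteq> 0" using as(3) tmax_0[OF M] by blast
        have aM: "a \<in> M"
        proof (rule ccontr)
          assume "a \<notin> M"
          hence "s / a \<in> loc R M" using as by (intro locI) auto
          moreover have "s / a = inverse r" using as(4) by simp
          ultimately show False using False by simp
        qed
        have zaR: "z * a \<in> R" using z aM unfolding colon_def by blast
        have "z * p * s \<notin> M" using Mp zpR p(2) as(2,3) unfolding prime_ideal_of_def by blast
        hence r'l: "(z * a) / (z * p * s) \<in> loc R M" using zaR zpR as(2) by (intro locI) auto
        define r' where "r' = r / p"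
        have r'eq: "(z * a) / (z * p * s) = r'" unfolding r'_def using as(4) z0 p0 s0 by (simp add: field_simps)
        have r'loc: "r' \<in> loc R M" using r'l r'eq by simp
        have r'0: "r' \<noteq> 0" unfolding r'_def using r(2) p0 by simp
        have vr': "val V r' = val V r - val V p" unfolding r'_def using val_div[OF vm[OF V(1)] r(2) p0] .
        have "0 \<le> val V r'" using r'loc locV memV[OF V(1)] r'0 by blast
        hence "nat (val V r') < n" using vr' vp r(3) by linarith
        then obtain k u where ku: "r' = p ^ k * u" "u \<in> loc R M" "inverse u \<in> loc R M"
          using less.IH r'loc r'0 by blast
        have "r = p * r'" unfolding r'_def using p0 by simp
        hence "r = p ^ Suc k * u" using ku(1) by simp
        thus ?thesis using ku(2,3) by blast
      qed
    qed
  qed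
  have dec: "\<exists>k u. r = p ^ k * u \<and> u \<in> loc R M \<and> inverse u \<in> loc R M \<and> u \<noteq> 0"
    if rr: "r \<in> loc R M" "r \<noteq> 0" for r
  proof -
    obtain k u where "r = p ^ k * u" "u \<in> loc R M" "inverse u \<in> loc R M"
      using decomp[of "nat (val V r)", rule_format, OF rr refl] by blast
    moreover hence "u \<noteq> 0" using rr(2) by auto
    ultimately show ?thesis by blast
  qed
  have "V \<subseteq> loc R M"
  proof
    fix w assume wV: "w \<in> V"
    show "w \<in> loc R M"
    proof (cases "w = 0")
      case True thus ?thesis using loc_R[OF R0 M1] by simp
    next
      case False
      obtain a b where ab: "a \<in> R" "b \<in> R" "b \<noteq> 0" "w = a / b" using frac .
      have a0: "a \<noteq> 0" using False ab(4) by auto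
      obtain i u where iu: "a = p ^ i * u" "u \<in> loc R M" "inverse u \<in> loc R M" "u \<noteq> 0"
        using dec[OF loc_R[OF ab(1) M1] a0] by blast
      obtain j u' where ju: "b = p ^ j * u'" "u' \<in> loc R M" "inverse u' \<in> loc R M" "u' \<noteq> 0"
        using dec[OF loc_R[OF ab(2) M1] ab(3)] by blast
      have vu: "val V u = 0" "val V u' = 0" using unitval iu ju by auto
      have va: "val V a = int i * val V p" using iu(1) vu vm0[OF V(1)] val_pow[OF vm[OF V(1)] p0] iu(4) p0 by simp
      have vb: "val V b = int j * val V p" using ju(1) vu vm0[OF V(1)] val_pow[OF vm[OF V(1)] p0] ju(4) p0 by simp
      have "val V w = val V a - val V b" using ab(4) val_div[OF vm[OF V(1)] a0 ab(3)] by simp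
      moreover have "0 \<le> val V w" using wV False memV[OF V(1)] by blast
      ultimately have "int j * val V p \<le> int i * val V p" using va vb by simp
      hence ji: "j \<le> i" using vp by (simp add: mult_le_cancel_right)
      have "w = p ^ (i - j) * (u * inverse u')"
      proof -
        have "p ^ i = p ^ (i - j) * p ^ j" using ji by (simp add: power_add[symmetric])
        thus ?thesis using ab(4) iu(1) ju(1) p0 ju(4) by (simp add: field_simps)
      qed
      moreover have "p ^ (i - j) \<in> loc R M" using loc_R[OF Rpow[OF pR] M1] .
      moreover have "u * inverse u' \<in> loc R M" using loc_mult[OF Mp iu(2) ju(3)] .
      ultimately show ?thesis using loc_mult[OF Mp] by simp
    qed
  qed
  thus ?thesis using locV by blast
qed

lemma krull_ak: assumes M: "M \<in> t_Max R" shows "dvr (loc R M)"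
proof -
  obtain z where z: "z \<in> colon R M" "z \<notin> R" using tmax_colon[OF M] by blast
  obtain p where p: "p \<in> M" "z * p \<notin> M" using tmax_pi[OF M z] by blast
  have "p \<noteq> 0" using p(2) tmax_0[OF M] by auto
  then obtain V where V: "V \<in> Vs" "\<forall>s\<in>R. s \<notin> M \<longrightarrow> inverse s \<in> V" "inverse p \<notin> V"
    using tmax_V[OF M p(1)] by blast
  have "loc R M = V" by (rule loc_eq_V[OF M z(1) p V])
  thus ?thesis using dvrV[OF V(1)] by simp
qed

lemma krull_sep: assumes M: "M \<in> t_Max R"
  shows "\<exists>y. (\<forall>N\<in>t_Max R. N \<noteq> M \<longrightarrow> y \<in> loc R N) \<and> y \<notin> loc R M"
proof -
  obtain z where z: "z \<in> colon R M" "z \<notin> R" using tmax_colon[OF M] by blast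
  have zN: "z \<in> loc R N" if N: "N \<in> t_Max R" "N \<noteq> M" for N
  proof -
    have "\<not> M \<subseteq> N" using tmax_incomp[OF M N(1)] N(2) by blast
    then obtain m where m: "m \<in> M" "m \<notin> N" by blast
    have m0: "m \<noteq> 0" using m(2) tmax_0[OF N(1)] by blast
    have "z * m \<in> R" using z(1) m(1) unfolding colon_def by blast
    moreover have "m \<in> R" using m(1) tmax_sub[OF M] by blast
    ultimately have "(z * m) / m \<in> loc R N" using m(2) by (intro locI)
    thus ?thesis using m0 by simp
  qed
  have "z \<notin> loc R M"
  proof
    assume "z \<in> loc R M"
    hence "z \<in> (\<Inter>N\<in>t_Max R. loc R N)" using zN by blast
    thus False using inter_loc z(2) by blast
  qed
  thus ?thesis using zN by blast
qed

lemma krull_tsharp: "t_sharp R"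
  unfolding t_sharp_def
proof (intro allI impI)
  fix M1 M2 assume H: "M1 \<subseteq> t_Max R \<and> M2 \<subseteq> t_Max R \<and> M1 \<noteq> M2"
  have key: "(\<Inter>M\<in>A. loc R M) \<noteq> (\<Inter>M\<in>B. loc R M)" if hh: "M \<in> A" "M \<notin> B" "A \<subseteq> t_Max R" "B \<subseteq> t_Max R"
    for A B M
  proof -
    obtain y where y: "\<forall>N\<in>t_Max R. N \<noteq> M \<longrightarrow> y \<in> loc R N" "y \<notin> loc R M"
      using krull_sep[of M] hh by blast
    have "y \<in> loc R N" if "N \<in> B" for N
    proof -
      have "N \<in> t_Max R" "N \<noteq> M" using that hh(2,4) by auto
      thus ?thesis using y(1) by blast
    qed
    hence "y \<in> (\<Inter>M\<in>B. loc R M)" by simp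
    moreover have "y \<notin> (\<Inter>M\<in>A. loc R M)" using y(2) hh(1) by (simp add: bexI[of _ M])
    ultimately show ?thesis by metis
  qed
  show "(\<Inter>M\<in>M1. loc R M) \<noteq> (\<Inter>M\<in>M2. loc R M)"
  proof (cases "M1 \<subseteq> M2")
    case True
    then obtain M where "M \<in> M2" "M \<notin> M1" using H by blast
    thus ?thesis using key[of M M2 M1] H by auto
  next
    case False
    then obtain M where "M \<in> M1" "M \<notin> M2" by blast
    thus ?thesis using key[of M M1 M2] H by blast
  qed
qed

end

context dom begin
lemma krull_imp: assumes "krull R" shows "almost_krull R \<and> t_sharp R"
proof -
  obtain Vs where Vs: "\<forall>V\<in>Vs. dvr V" "R = \<Inter>Vs" "\<forall>x\<in>R. x \<noteq> 0 \<longrightarrow> finite {V\<in>Vs. inverse x \<notin> V}"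
    using assms unfolding krull_def by blast
  have "\<forall>V\<in>Vs. \<exists>v::'a\<Rightarrow>int. (\<forall>x y. x \<noteq> 0 \<and> y \<noteq> 0 \<longrightarrow> v (x * y) = v x + v y) \<and> V = {x. x = 0 \<or> 0 \<le> v x}"
  proof
    fix V assume "V \<in> Vs"
    hence "dvr V" using Vs(1) by blast
    then obtain v :: "'a \<Rightarrow> int" where v: "\<forall>x y. x \<noteq> 0 \<and> y \<noteq> 0 \<longrightarrow> v (x * y) = v x + v y"
      "V = {x. x = 0 \<or> 0 \<le> v x}" by (rule dvrE)
    show "\<exists>v::'a\<Rightarrow>int. (\<forall>x y. x \<noteq> 0 \<and> y \<noteq> 0 \<longrightarrow> v (x * y) = v x + v y) \<and> V = {x. x = 0 \<or> 0 \<le> v x}"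
      using v by blast
  qed
  from bchoice[OF this] obtain val :: "'a set \<Rightarrow> 'a \<Rightarrow> int" where val: "\<forall>V\<in>Vs. (\<forall>x y. x \<noteq> 0 \<and> y \<noteq> 0 \<longrightarrow> val V (x * y) = val V x + val V y) \<and> V = {x. x = 0 \<or> 0 \<le> val V x}"
    by blast
  interpret K: krull_dom R Vs val
  proof (unfold_locales)
    show "\<And>V. V \<in> Vs \<Longrightarrow> dvr V" using Vs(1) by blast
    show "\<And>V x y. V \<in> Vs \<Longrightarrow> x \<noteq> 0 \<Longrightarrow> y \<noteq> 0 \<Longrightarrow> val V (x * y) = val V x + val V y" using val by blast
    show "\<And>V. V \<in> Vs \<Longrightarrow> V = {x. x = 0 \<or> 0 \<le> val V x}" using val by blast
    show "R = \<Inter>Vs" by (rule Vs(2))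
    show "\<And>x. x \<in> R \<Longrightarrow> x \<noteq> 0 \<Longrightarrow> finite {V\<in>Vs. inverse x \<notin> V}" using Vs(3) by blast
  qed
  show ?thesis unfolding almost_krull_def using K.krull_ak K.krull_tsharp by blast
qed

lemma main: "(almost_krull R \<and> t_sharp R \<longleftrightarrow> almost_krull R \<and> t_sharp_sharp R)
       \<and> (almost_krull R \<and> t_sharp_sharp R \<longleftrightarrow> krull R)"
  using part1 hard krull_imp by blast
end

theorem theorem1p17:
  fixes R :: "'a::field set"
  assumes "subring R" and "quotient_field_is_UNIV R" and "R \<noteq> UNIV"
  shows "(almost_krull R \<and> t_sharp R \<longleftrightarrow> almost_krull R \<and> t_sharp_sharp R)
       \<and> (almost_krull R \<and> t_sharp_sharp R \<longleftrightarrow> krull R)"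
proof -
  interpret dom R using assms by unfold_locales
  show ?thesis by (rule main)
qed

end
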